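(* Let $A \in \mathbb{Z}^{(n-2)\times n}$ have rank $n-2$ with $\ker_{\mathbb{Z}}A\cap\mathbb{N}^n=\{0\}$, let $B$ be a Gale transform of $A$ with all rows nonzero, and let $\tilde B=\{\tilde b_1,\dots,\tilde b_n\}$ be the reduced Gale transform. Then $I_A$ is strongly robust if and only if $-\tilde b_i\in\mathcal{H}_A$ for every $i=1,\dots,n$.
   Context: $I_A = \langle p^u - p^v : u,v\in\mathbb{N}^n,\ Au = Av\rangle \subseteq \mathbb{K}[p_1,\dots,p_n]$. For $u \in \mathbb{N}^n$, $\mathcal{F}(u)=\{v\in\mathbb{N}^n : Av = Au\}$. A binomial $p^u - p^v$ is indispensable if $\mathcal{F}(u)=\{u,v\}$ and $\mathrm{supp}(u)\cap\mathrm{supp}(v)=\emptyset$; the set of these is $\mathcal{S}(A)$. A binomial $p^u-p^v\in I_A$ is primitive if there is no other binomial $p^{u'}-p^{v'}\in I_A$ with $p^{u'}\mid p^u$ and $p^{v'}\mid p^v$; the Graver basis $\mathcal{G}r(A)$ is the set of primitive binomials. $I_A$ is strongly robust if $\mathcal{S}(A)=\mathcal{G}r(A)$. A Gale transform of $A$ is an $n\times 2$ integer matrix $B$ whose columns form a basis of $\ker_{\mathbb{Z}}A$, with rows $b_i=(b_{i1},b_{i2})$. The reduced Gale transform is $\tilde B$ with $\tilde b_i=\gcd(b_{i1},b_{i2})^{-1}(-b_{i2},b_{i1})$. Since $\ker_{\mathbb{Z}}A\cap\mathbb{N}^n=\{0\}$, the $\tilde b_i$ are not contained in any closed half-plane through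 the origin; index them in cyclic (counterclockwise angular) order so that for each $i$ (with $\tilde b_{n+1}=\tilde b_1$) no other $\tilde b_j$ lies in the interior of $\mathrm{cone}(\tilde b_i,\tilde b_{i+1})$. Let $H_i$ be the Hilbert basis (minimal generating set of the monoid $\mathrm{cone}(\tilde b_i,\tilde b_{i+1})\cap\mathbb{Z}^2$). The Hilbert basis of the reduced Gale configuration is $\mathcal{H}_A=\{u\in\mathbb{Z}^2 : u\in H_1\cup\cdots\cup H_n \text{ and } -u\in H_1\cup\cdots\cup H_n\}$. *)

theory Defs
  imports Complex_Main
begin

text \<open>Integer matrices are functions nat => nat => int, indexed by row and column;
  integer/natural vectors are functions nat => _ with entries beyond the dimension
  ignored (integer vectors) or required to be zero (natural vectors).\<close>

definition full_row_rank :: "(nat \<Rightarrow> nat \<Rightarrow> int) \<Rightarrow> nat \<Rightarrow> nat \<Rightarrow> bool" where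
  "full_row_rank A m n \<longleftrightarrow>
     (\<forall>y :: nat \<Rightarrow> real. (\<forall>j<n. (\<Sum>i<m. y i * of_int (A i j)) = 0) \<longrightarrow> (\<forall>i<m. y i = 0))"

definition pointed_kernel :: "(nat \<Rightarrow> nat \<Rightarrow> int) \<Rightarrow> nat \<Rightarrow> nat \<Rightarrow> bool" where
  "pointed_kernel A m n \<longleftrightarrow>
     (\<forall>x :: nat \<Rightarrow> int. (\<forall>j<n. x j \<ge> 0) \<and> (\<forall>i<m. (\<Sum>j<n. A i j * x j) = 0)
        \<longrightarrow> (\<forall>j<n. x j = 0))"

text \<open>B (rows b j = (b_j1, b_j2), j < n) is a Gale transform of A: its two columns
  form a Z-basis of ker_Z A.\<close>
definition gale_transform ::
  "(nat \<Rightarrow> nat \<Rightarrow> int) \<Rightarrow> nat \<Rightarrow> nat \<Rightarrow> (nat \<Rightarrow> int \<times> int) \<Rightarrow> bool" where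
  "gale_transform A m n b \<longleftrightarrow>
     (\<forall>i<m. (\<Sum>j<n. A i j * fst (b j)) = 0) \<and>
     (\<forall>i<m. (\<Sum>j<n. A i j * snd (b j)) = 0) \<and>
     (\<forall>x :: nat \<Rightarrow> int. (\<forall>i<m. (\<Sum>j<n. A i j * x j) = 0) \<longrightarrow>
        (\<exists>!l :: int \<times> int. \<forall>j<n. x j = fst l * fst (b j) + snd l * snd (b j)))"

definition reduced_gale :: "int \<times> int \<Rightarrow> int \<times> int" where
  "reduced_gale v = (- snd v div gcd (fst v) (snd v), fst v div gcd (fst v) (snd v))"

definition to_complex :: "int \<times> int \<Rightarrow> complex" where
  "to_complex v = Complex (of_int (fst v)) (of_int (snd v))"

definition ccw_order :: "nat \<Rightarrow> (nat \<Rightarrow> int \<times> int) \<Rightarrow> (nat \<Rightarrow> nat) \<Rightarrow> bool" where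
  "ccw_order n bt \<sigma> \<longleftrightarrow> bij_betw \<sigma> {..<n} {..<n} \<and>
     (\<forall>i j. i \<le> j \<and> j < n \<longrightarrow> Arg (to_complex (bt (\<sigma> i))) \<le> Arg (to_complex (bt (\<sigma> j))))"

definition cone_monoid :: "int \<times> int \<Rightarrow> int \<times> int \<Rightarrow> (int \<times> int) set" where
  "cone_monoid u v = {x. \<exists>a b :: real. a \<ge> 0 \<and> b \<ge> 0 \<and>
      of_int (fst x) = a * of_int (fst u) + b * of_int (fst v) \<and>
      of_int (snd x) = a * of_int (snd u) + b * of_int (snd v)}"

definition generates :: "(int \<times> int) set \<Rightarrow> (int \<times> int) set \<Rightarrow> bool" where
  "generates G M \<longleftrightarrow> (\<forall>x\<in>M. \<exists>F (c :: int \<times> int \<Rightarrow> nat). finite F \<and> F \<subseteq> G \<and>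
      x = ((\<Sum>g\<in>F. int (c g) * fst g), (\<Sum>g\<in>F. int (c g) * snd g)))"

definition hilbert_basis :: "(int \<times> int) set \<Rightarrow> (int \<times> int) set" where
  "hilbert_basis M = (THE G. G \<subseteq> M \<and> generates G M \<and> (\<forall>G'. G' \<subset> G \<longrightarrow> \<not> generates G' M))"

definition neg2 :: "int \<times> int \<Rightarrow> int \<times> int" where
  "neg2 v = (- fst v, - snd v)"

definition gale_hilbert :: "nat \<Rightarrow> (nat \<Rightarrow> int \<times> int) \<Rightarrow> (nat \<Rightarrow> nat) \<Rightarrow> (int \<times> int) set" where
  "gale_hilbert n bt \<sigma> =
     (let H = (\<Union>i<n. hilbert_basis (cone_monoid (bt (\<sigma> i)) (bt (\<sigma> ((i + 1) mod n)))))
      in {u. u \<in> H \<and> neg2 u \<in> H})"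

definition natvecs :: "nat \<Rightarrow> (nat \<Rightarrow> nat) set" where
  "natvecs n = {u. \<forall>j\<ge>n. u j = 0}"

definition matmul :: "(nat \<Rightarrow> nat \<Rightarrow> int) \<Rightarrow> nat \<Rightarrow> nat \<Rightarrow> (nat \<Rightarrow> nat) \<Rightarrow> nat \<Rightarrow> int" where
  "matmul A m n u = (\<lambda>i. if i < m then (\<Sum>j<n. A i j * int (u j)) else 0)"

definition fiber :: "(nat \<Rightarrow> nat \<Rightarrow> int) \<Rightarrow> nat \<Rightarrow> nat \<Rightarrow> (nat \<Rightarrow> nat) \<Rightarrow> (nat \<Rightarrow> nat) set" where
  "fiber A m n u = {v \<in> natvecs n. matmul A m n v = matmul A m n u}"

text \<open>A (nonzero) binomial p^u - p^v is encoded by the pair (u, v) with u \<noteq> v;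
  p^u - p^v \<in> I_A iff Au = Av.\<close>
definition indispensable_set :: "(nat \<Rightarrow> nat \<Rightarrow> int) \<Rightarrow> nat \<Rightarrow> nat \<Rightarrow> ((nat \<Rightarrow> nat) \<times> (nat \<Rightarrow> nat)) set" where
  "indispensable_set A m n = {(u, v). u \<in> natvecs n \<and> v \<in> natvecs n \<and> u \<noteq> v \<and>
      fiber A m n u = {u, v} \<and> (\<forall>j. u j = 0 \<or> v j = 0)}"

text \<open>Primitive binomials; p^u' divides p^u iff u' \<le> u componentwise.\<close>
definition graver_set :: "(nat \<Rightarrow> nat \<Rightarrow> int) \<Rightarrow> nat \<Rightarrow> nat \<Rightarrow> ((nat \<Rightarrow> nat) \<times> (nat \<Rightarrow> nat)) set" where
  "graver_set A m n = {(u, v). u \<in> natvecs n \<and> v \<in> natvecs n \<and> u \<noteq> v \<and>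
      matmul A m n u = matmul A m n v \<and>
      \<not> (\<exists>u' v'. u' \<in> natvecs n \<and> v' \<in> natvecs n \<and> u' \<noteq> v' \<and>
             matmul A m n u' = matmul A m n v' \<and> u' \<le> u \<and> v' \<le> v \<and> (u', v') \<noteq> (u, v))}"

definition strongly_robust :: "(nat \<Rightarrow> nat \<Rightarrow> int) \<Rightarrow> nat \<Rightarrow> nat \<Rightarrow> bool" where
  "strongly_robust A m n \<longleftrightarrow> indispensable_set A m n = graver_set A m n"

end

theory Submission
  imports Defs "HOL-Library.Product_Plus"
begin

inductive_set nspan :: "(int \<times> int) set \<Rightarrow> (int \<times> int) set" for G where
  nspan0: "0 \<in> nspan G"
| nspanI: "g \<in> G \<Longrightarrow> x \<in> nspan G \<Longrightarrow> g + x \<in> nspan G"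

lemma nspan_add: "x \<in> nspan G \<Longrightarrow> y \<in> nspan G \<Longrightarrow> x + y \<in> nspan G"
  by (induction x rule: nspan.induct) (auto simp: add.assoc intro: nspanI)

lemma nspan_mult: "g \<in> G \<Longrightarrow> x \<in> nspan G \<Longrightarrow> (int k * fst g, int k * snd g) + x \<in> nspan G"
proof (induction k arbitrary: x)
  case 0 then show ?case by (simp add: zero_prod_def[symmetric])
next
  case (Suc k)
  have "(int (Suc k) * fst g, int (Suc k) * snd g) + x = (int k * fst g, int k * snd g) + (g + x)"
    by (cases g) (simp add: algebra_simps)
  then show ?case using Suc nspanI by metis
qed

lemma gen_sum_in_nspan:
  assumes "finite F" "F \<subseteq> G"
  shows "((\<Sum>g\<in>F. int (c g) * fst g), (\<Sum>g\<in>F. int (c g) * snd g)) \<in> nspan G"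
  using assms
proof (induction F rule: finite_induct)
  case empty then show ?case using nspan0 by (simp add: zero_prod_def)
next
  case (insert g F)
  then have "((\<Sum>g\<in>F. int (c g) * fst g), (\<Sum>g\<in>F. int (c g) * snd g)) \<in> nspan G" by auto
  from nspan_mult[OF _ this, of g "c g"] insert show ?case by simp
qed

lemma nspan_gen_sum:
  assumes "x \<in> nspan G"
  shows "\<exists>F (c :: int \<times> int \<Rightarrow> nat). finite F \<and> F \<subseteq> G \<and>
      x = ((\<Sum>g\<in>F. int (c g) * fst g), (\<Sum>g\<in>F. int (c g) * snd g))"
  using assms
proof (induction x rule: nspan.induct)
  case nspan0
  have "(0::int\<times>int) = ((\<Sum>g\<in>{}. int (c g) * fst g), (\<Sum>g\<in>{}. int (c g) * snd g))" for c :: "int \<times> int \<Rightarrow> nat"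
    by (simp add: zero_prod_def)
  then show ?case by blast
next
  case (nspanI g x)
  then obtain F c where F: "finite F" "F \<subseteq> G"
    and x: "x = ((\<Sum>g\<in>F. int (c g) * fst g), (\<Sum>g\<in>F. int (c g) * snd g))" by blast
  show ?case
  proof (cases "g \<in> F")
    case True
    define c' where "c' = c(g := Suc (c g))"
    have gen: "(\<Sum>h\<in>F. int (c' h) * f h) = f g + (\<Sum>h\<in>F. int (c h) * f h)" for f :: "int \<times> int \<Rightarrow> int"
    proof -
      have r1: "(\<Sum>h\<in>F. int (c' h) * f h) = int (c' g) * f g + (\<Sum>h\<in>F-{g}. int (c' h) * f h)"
        by (rule sum.remove[OF F(1) True])
      have r2: "(\<Sum>h\<in>F. int (c h) * f h) = int (c g) * f g + (\<Sum>h\<in>F-{g}. int (c h) * f h)"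
        by (rule sum.remove[OF F(1) True])
      have r3: "(\<Sum>h\<in>F-{g}. int (c' h) * f h) = (\<Sum>h\<in>F-{g}. int (c h) * f h)"
        by (rule sum.cong) (auto simp: c'_def)
      have "int (c' g) * f g = f g + int (c g) * f g" by (simp add: c'_def algebra_simps)
      then show ?thesis using r1 r2 r3 by simp
    qed
    have "g + x = ((\<Sum>h\<in>F. int (c' h) * fst h), (\<Sum>h\<in>F. int (c' h) * snd h))"
      using gen[of fst] gen[of snd] x by (simp add: prod_eq_iff)
    then show ?thesis using F by blast
  next
    case False
    define c' where "c' = c(g := 1)"
    have gen: "(\<Sum>h\<in>insert g F. int (c' h) * f h) = f g + (\<Sum>h\<in>F. int (c h) * f h)" for f :: "int \<times> int \<Rightarrow> int"
    proof -
      have r1: "(\<Sum>h\<in>insert g F. int (c' h) * f h) = int (c' g) * f g + (\<Sum>h\<in>F. int (c' h) * f h)"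
        by (rule sum.insert[OF F(1) False])
      have r3: "(\<Sum>h\<in>F. int (c' h) * f h) = (\<Sum>h\<in>F. int (c h) * f h)"
        by (rule sum.cong) (use False in \<open>auto simp: c'_def\<close>)
      show ?thesis using r1 r3 by (simp add: c'_def)
    qed
    have "g + x = ((\<Sum>h\<in>insert g F. int (c' h) * fst h), (\<Sum>h\<in>insert g F. int (c' h) * snd h))"
      using gen[of fst] gen[of snd] x by (simp add: prod_eq_iff)
    moreover have "finite (insert g F)" "insert g F \<subseteq> G" using F nspanI.hyps(1) by auto
    ultimately show ?thesis by blast
  qed
qed

lemma generates_iff: "generates G M \<longleftrightarrow> M \<subseteq> nspan G"
proof
  assume "generates G M"
  then show "M \<subseteq> nspan G" unfolding generates_def
    by (metis gen_sum_in_nspan subsetI)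
next
  assume "M \<subseteq> nspan G"
  then show "generates G M" unfolding generates_def
    using nspan_gen_sum by (meson subsetD)
qed

definition Irr :: "(int \<times> int) set \<Rightarrow> (int \<times> int) set" where
  "Irr M = {x \<in> M. x \<noteq> 0 \<and> \<not> (\<exists>y z. y \<in> M \<and> z \<in> M \<and> y \<noteq> 0 \<and> z \<noteq> 0 \<and> x = y + z)}"

lemma hb_eq_irr:
  fixes hgt :: "int \<times> int \<Rightarrow> int"
  assumes add: "\<And>x y. x \<in> M \<Longrightarrow> y \<in> M \<Longrightarrow> x + y \<in> M"
    and pos: "\<And>x. x \<in> M \<Longrightarrow> x \<noteq> 0 \<Longrightarrow> hgt x > 0"
    and hadd: "\<And>x y. hgt (x + y) = hgt x + hgt y"
    and zero: "0 \<in> M"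
  shows "hilbert_basis M = Irr M"
proof -
  have gen: "x \<in> nspan (Irr M)" if "x \<in> M" for x
  proof -
    have "\<forall>x. nat (hgt x) = k \<longrightarrow> x \<in> M \<longrightarrow> x \<in> nspan (Irr M)" for k
    proof (induction k rule: less_induct)
      case (less k)
      show ?case
      proof (intro allI impI)
        fix x assume k: "nat (hgt x) = k" and xM: "x \<in> M"
        show "x \<in> nspan (Irr M)"
        proof (cases "x = 0")
          case True then show ?thesis using nspan0 by simp
        next
          case False
          show ?thesis
          proof (cases "x \<in> Irr M")
            case True
            then show ?thesis using nspanI[OF True nspan0] by simp
          next
            case nI: False
            then obtain y z where yz: "y \<in> M" "z \<in> M" "y \<noteq> 0" "z \<noteq> 0" "x = y + z"
              using False xM unfolding Irr_def by blast
            have hy: "hgt y > 0" "hgt z > 0" using pos yz by auto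
            have "hgt x = hgt y + hgt z" using hadd yz by simp
            then have "nat (hgt y) < k" "nat (hgt z) < k" using hy k by auto
            moreover have IH: "\<And>m w. m < k \<Longrightarrow> nat (hgt w) = m \<Longrightarrow> w \<in> M \<Longrightarrow> w \<in> nspan (Irr M)"
              using less by blast
            ultimately have "y \<in> nspan (Irr M)" "z \<in> nspan (Irr M)"
              using IH[OF _ refl, of y] IH[OF _ refl, of z] yz(1,2) by blast+
            then show ?thesis using nspan_add yz by simp
          qed
        qed
      qed
    qed
    then show ?thesis using that by blast
  qed
  have sub: "nspan G \<subseteq> M" if "G \<subseteq> M" "0 \<in> M" for G
  proof
    fix x assume "x \<in> nspan G" then show "x \<in> M"
      by (induction x rule: nspan.induct) (use that add in auto)
  qed
  have contains: "Irr M \<subseteq> G" if "G \<subseteq> M" "generates G M" for G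
  proof
    fix x assume xI: "x \<in> Irr M"
    have "x \<in> M" using xI by (simp add: Irr_def)
    then have xn: "x \<in> nspan G" using that(2) unfolding generates_iff by (rule subsetD[rotated])
    have "x \<in> Irr M \<longrightarrow> x \<in> G" using xn
    proof (induction x rule: nspan.induct)
      case nspan0 then show ?case by (simp add: Irr_def)
    next
      case (nspanI g x)
      show ?case
      proof
        assume gx: "g + x \<in> Irr M"
        show "g + x \<in> G"
        proof (cases "x = 0")
          case True then show ?thesis using nspanI by simp
        next
          case xn0: False
          show ?thesis
          proof (cases "g = 0")
            case True then show ?thesis using nspanI gx by simp
          next
            case False
            have "0 \<in> M" by (rule zero)
            then have "x \<in> M" using sub[OF that(1)] nspanI by blast
            moreover have "g \<in> M" using that nspanI by blast
            ultimately show ?thesis using gx xn0 False unfolding Irr_def by blast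
          qed
        qed
      qed
    qed
    then show "x \<in> G" using xI by blast
  qed
  have irrgen: "generates (Irr M) M" unfolding generates_iff using gen by blast
  have IM: "Irr M \<subseteq> M" by (auto simp: Irr_def)
  have minI: "\<not> generates G' M" if "G' \<subset> Irr M" for G'
  proof
    assume "generates G' M"
    moreover have "G' \<subseteq> M" using that IM by blast
    ultimately have "Irr M \<subseteq> G'" using contains by blast
    then show False using that by blast
  qed
  have P: "Irr M \<subseteq> M \<and> generates (Irr M) M \<and> (\<forall>G'. G' \<subset> Irr M \<longrightarrow> \<not> generates G' M)"
    using irrgen IM minI by blast
  show ?thesis unfolding hilbert_basis_def
  proof (rule the_equality[where P="\<lambda>G. G \<subseteq> M \<and> generates G M \<and> (\<forall>G'. G' \<subset> G \<longrightarrow> \<not> generates G' M)", OF P])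
    fix G assume G: "G \<subseteq> M \<and> generates G M \<and> (\<forall>G'. G' \<subset> G \<longrightarrow> \<not> generates G' M)"
    then have "Irr M \<subseteq> G" using contains by blast
    show "G = Irr M"
    proof (rule ccontr)
      assume "G \<noteq> Irr M"
      then have "Irr M \<subset> G" using \<open>Irr M \<subseteq> G\<close> by blast
      then show False using G irrgen by blast
    qed
  qed
qed

definition det2 :: "int \<times> int \<Rightarrow> int \<times> int \<Rightarrow> int" where
  "det2 u v = fst u * snd v - snd u * fst v"

lemma det2_add1: "det2 (u + v) x = det2 u x + det2 v x"
  and det2_add2: "det2 x (u + v) = det2 x u + det2 x v"
  and det2_diff1: "det2 (u - v) x = det2 u x - det2 v x"
  and det2_diff2: "det2 x (u - v) = det2 x u - det2 x v"
  and det2_neg1: "det2 (- u) x = - det2 u x"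
  and det2_neg2: "det2 x (- u) = - det2 x u"
  and det2_self: "det2 u u = 0"
  and det2_swap: "det2 v u = - det2 u v"
  and det2_zero1: "det2 0 u = 0"
  and det2_zero2: "det2 u 0 = 0"
  by (simp_all add: det2_def algebra_simps)

lemmas det2_lin = det2_add1 det2_add2 det2_diff1 det2_diff2 det2_neg1 det2_neg2 det2_self
  det2_zero1 det2_zero2

lemma cramer_fst: "det2 y z * fst x = det2 x z * fst y + det2 y x * fst z"
  by (simp add: det2_def algebra_simps)
lemma cramer_snd: "det2 y z * snd x = det2 x z * snd y + det2 y x * snd z"
  by (simp add: det2_def algebra_simps)
lemma cramer_det1: "det2 y z * det2 a x = det2 x z * det2 a y + det2 y x * det2 a z"
  by (simp add: det2_def algebra_simps)
lemma cramer_det2: "det2 y z * det2 x c = det2 x z * det2 y c + det2 y x * det2 z c"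
  by (simp add: det2_def algebra_simps)

lemma cramer_zero:
  assumes "det2 y z \<noteq> 0" "det2 x z = 0" "det2 y x = 0"
  shows "x = 0"
proof -
  have "det2 y z * fst x = 0" "det2 y z * snd x = 0"
    using cramer_fst[of y z x] cramer_snd[of y z x] assms by simp_all
  then show ?thesis using assms(1) by (simp add: prod_eq_iff)
qed

lemma bezout_line:
  fixes v y :: "int \<times> int"
  assumes "coprime (fst v) (snd v)" "det2 y v = 0"
  shows "\<exists>k. y = (k * fst v, k * snd v)"
proof -
  obtain s t where st: "s * fst v + t * snd v = 1"
    using assms(1) by (metis bezout_int coprime_iff_gcd_eq_1)
  let ?k = "s * fst y + t * snd y"
  have d: "fst y * snd v = snd y * fst v" using assms(2) by (simp add: det2_def)
  have "?k * fst v = fst y * (s * fst v + t * snd v)"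
    using d by (simp add: algebra_simps)
  moreover have "?k * snd v = snd y * (s * fst v + t * snd v)"
    using d by (simp add: algebra_simps)
  ultimately show ?thesis using st by (intro exI[of _ ?k]) (simp add: prod_eq_iff)
qed

lemma prim_mult:
  fixes v u :: "int \<times> int" and m :: int
  assumes "coprime (fst v) (snd v)" "v = (m * fst u, m * snd u)"
  shows "m = 1 \<or> m = -1"
proof -
  have "coprime (m * fst u) (m * snd u)" using assms by simp
  then have "coprime m m" by simp
  then have "m dvd 1" by simp
  then have "\<bar>m\<bar> = 1" by simp
  then show ?thesis by linarith
qed

lemma small_conf:
  fixes L Y x t :: int
  assumes "0 < L" "0 \<le> Y" "Y \<le> L" "L * x = Y * t"
  shows "min 0 t \<le> x \<and> x \<le> max 0 t"
proof (cases "t \<ge> 0")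
  case True
  have "L * x \<ge> 0" using assms True by simp
  then have x0: "x \<ge> 0" using assms(1) by (simp add: zero_le_mult_iff)
  have "L * x \<le> L * t" using assms True by (simp add: mult_right_mono)
  then have "x \<le> t" using assms(1) by simp
  then show ?thesis using x0 True by simp
next
  case False
  have "L * x \<le> 0" using assms False by (simp add: mult_nonneg_nonpos)
  then have x0: "x \<le> 0" using assms(1) by (simp add: mult_le_0_iff)
  have "L * t \<le> L * x" using assms False by (simp add: mult_right_mono_neg)
  then have "t \<le> x" using assms(1) by simp
  then show ?thesis using x0 False by simp
qed

lemma sum_prod_zero:
  fixes A B C E :: int
  assumes "A > 0" "C > 0" "B \<ge> 0" "E \<ge> 0" "A * B + C * E \<le> 0"
  shows "B = 0 \<and> E = 0"
proof -
  have "A * B \<ge> 0" "C * E \<ge> 0" using assms by simp_all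
  then have "A * B = 0" "C * E = 0" using assms(5) by linarith+
  then show ?thesis using assms(1,2) by simp
qed

lemma sq_pos:
  fixes x y :: int
  assumes "x \<noteq> 0 \<or> y \<noteq> 0"
  shows "x * x + y * y > 0"
proof -
  have "x * x \<ge> 0" "y * y \<ge> 0" by simp_all
  moreover have "x * x > 0 \<or> y * y > 0" using assms by (auto simp: zero_less_mult_iff)
  ultimately show ?thesis by linarith
qed

definition inS :: "int \<times> int \<Rightarrow> int \<times> int \<Rightarrow> int \<times> int \<Rightarrow> bool" where
  "inS a c x \<longleftrightarrow> det2 a x \<ge> 0 \<and> det2 x c \<ge> 0"

definition irrS :: "int \<times> int \<Rightarrow> int \<times> int \<Rightarrow> int \<times> int \<Rightarrow> bool" where
  "irrS a c v \<longleftrightarrow> \<not> (\<exists>p q. inS a c p \<and> inS a c q \<and> p \<noteq> 0 \<and> q \<noteq> 0 \<and> v = p + q)"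

lemma subsector:
  assumes "det2 p q > 0" "inS y z p" "inS y z q" "inS p q x"
  shows "inS y z x"
proof -
  have "det2 p q * det2 y x \<ge> 0"
    using cramer_det1[of p q y x] assms by (simp add: inS_def)
  moreover have "det2 p q * det2 x z \<ge> 0"
    using cramer_det2[of p q x z] assms by (simp add: inS_def)
  ultimately show ?thesis using assms(1) by (simp add: inS_def zero_le_mult_iff)
qed

lemma interior:
  assumes "det2 p q > 0" "inS y z p" "inS y z q" "det2 p x > 0" "det2 x q > 0"
    and "y \<noteq> 0" "z \<noteq> 0"
  shows "det2 y x > 0 \<and> det2 x z > 0"
proof -
  have e1: "det2 p q * det2 y x = det2 x q * det2 y p + det2 p x * det2 y q"
    using cramer_det1[of p q y x] by simp
  have e2: "det2 p q * det2 x z = det2 x q * det2 p z + det2 p x * det2 q z"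
    using cramer_det2[of p q x z] by simp
  have a: "det2 y p \<ge> 0" "det2 y q \<ge> 0" "det2 p z \<ge> 0" "det2 q z \<ge> 0"
    using assms by (auto simp: inS_def)
  have "det2 y x > 0"
  proof (rule ccontr)
    assume "\<not> det2 y x > 0"
    then have "det2 p q * det2 y x \<le> 0" using assms(1) by (simp add: mult_nonneg_nonpos)
    then have "det2 y p = 0 \<and> det2 y q = 0"
      using sum_prod_zero[of "det2 x q" "det2 p x" "det2 y p" "det2 y q"] e1 a assms(4,5) by linarith
    then have "y = 0" using cramer_zero[of p q y] assms(1) by (simp add: det2_swap[of p y])
    then show False using assms(6) by simp
  qed
  moreover have "det2 x z > 0"
  proof (rule ccontr)
    assume "\<not> det2 x z > 0"
    then have "det2 p q * det2 x z \<le> 0" using assms(1) by (simp add: mult_nonneg_nonpos)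
    then have "det2 p z = 0 \<and> det2 q z = 0"
      using sum_prod_zero[of "det2 x q" "det2 p x" "det2 p z" "det2 q z"] e2 a assms(4,5) by linarith
    then have "z = 0" using cramer_zero[of p q z] assms(1) by (simp add: det2_swap[of q z])
    then show False using assms(7) by simp
  qed
  ultimately show ?thesis by simp
qed

lemma pointed:
  assumes "det2 a c > 0" "det2 a x = 0" "det2 x c = 0"
  shows "x = 0"
  using cramer_zero[of a c x] assms by simp

definition smul :: "int \<Rightarrow> int \<times> int \<Rightarrow> int \<times> int" where
  "smul k v = (k * fst v, k * snd v)"

lemma det2_smul1: "det2 (smul k v) x = k * det2 v x"
  and det2_smul2: "det2 x (smul k v) = k * det2 x v"
  by (simp_all add: smul_def det2_def algebra_simps)

lemma smul_add: "smul k v + smul m v = smul (k + m) v"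
  by (simp add: smul_def algebra_simps)

lemma smul_zero_iff: "smul k v = 0 \<longleftrightarrow> k = 0 \<or> v = 0"
  by (auto simp: smul_def zero_prod_def prod_eq_iff)

lemma prim_split:
  assumes "coprime (fst v) (snd v)" "v = smul k1 u + smul k2 u" "k1 \<ge> 1" "k2 \<ge> 1"
  shows False
proof -
  have "v = ((k1 + k2) * fst u, (k1 + k2) * snd u)" using assms(2) by (simp add: smul_def distrib_right)
  then have "k1 + k2 = 1 \<or> k1 + k2 = -1" using prim_mult assms(1) by blast
  then show False using assms by auto
qed

lemma line_coef:
  assumes "coprime (fst v) (snd v)" "det2 y v = 0"
  obtains k where "y = smul k v"
  using bezout_line[OF assms] by (auto simp: smul_def)



lemma pointed_neg:
  assumes ac: "det2 a c > 0" and v: "inS a c v" and kv: "inS a c (smul k v)" and k: "k < 0"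
  shows "v = 0"
proof -
  have "k * det2 a v \<ge> 0" "k * det2 v c \<ge> 0" using kv by (auto simp: inS_def det2_smul1 det2_smul2)
  then have "det2 a v \<le> 0" "det2 v c \<le> 0" using k by (simp_all add: zero_le_mult_iff)
  then have "det2 a v = 0" "det2 v c = 0" using v by (auto simp: inS_def)
  then show ?thesis using pointed[OF ac] by blast
qed

lemma boundary_irr1:
  assumes ac: "det2 a c > 0" and pa: "coprime (fst a) (snd a)"
    and pq: "inS a c p" "inS a c q" "p \<noteq> 0" "q \<noteq> 0" "a = p + q"
  shows False
proof -
  have "det2 a p + det2 a q = 0" using pq(5) det2_self[of a] by (simp add: det2_add2)
  then have "det2 a p = 0" "det2 a q = 0" using pq(1,2) by (auto simp: inS_def)
  then have pa0: "det2 p a = 0" "det2 q a = 0" using det2_swap[of p a] det2_swap[of q a] by simp_all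
  obtain k1 where k1: "p = smul k1 a" using line_coef[OF pa pa0(1)] by blast
  obtain k2 where k2: "q = smul k2 a" using line_coef[OF pa pa0(2)] by blast
  note k = k1 k2
  have "k1 * det2 a c \<ge> 0" "k2 * det2 a c \<ge> 0" using pq(1,2) k by (auto simp: inS_def det2_smul1)
  then have "k1 \<ge> 0" "k2 \<ge> 0" using ac by (simp_all add: zero_le_mult_iff)
  moreover have "k1 \<noteq> 0" "k2 \<noteq> 0" using pq(3,4) k smul_zero_iff by auto
  ultimately have kk: "k1 \<ge> 1" "k2 \<ge> 1" by auto
  have "a = smul k1 a + smul k2 a" unfolding k1[symmetric] k2[symmetric] by (rule pq(5))
  then show False using prim_split[OF pa _ kk] by blast
qed

lemma boundary_irr2:
  assumes ac: "det2 a c > 0" and pc: "coprime (fst c) (snd c)"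
    and pq: "inS a c p" "inS a c q" "p \<noteq> 0" "q \<noteq> 0" "c = p + q"
  shows False
proof -
  have "det2 p c + det2 q c = 0" using pq(5) det2_self[of c] by (simp add: det2_add1)
  then have "det2 p c = 0" "det2 q c = 0" using pq(1,2) by (auto simp: inS_def)
  then have pc0: "det2 p c = 0" "det2 q c = 0" .
  obtain k1 where k1: "p = smul k1 c" using line_coef[OF pc pc0(1)] by blast
  obtain k2 where k2: "q = smul k2 c" using line_coef[OF pc pc0(2)] by blast
  note k = k1 k2
  have "k1 * det2 a c \<ge> 0" "k2 * det2 a c \<ge> 0" using pq(1,2) k by (auto simp: inS_def det2_smul2)
  then have "k1 \<ge> 0" "k2 \<ge> 0" using ac by (simp_all add: zero_le_mult_iff)
  moreover have "k1 \<noteq> 0" "k2 \<noteq> 0" using pq(3,4) k smul_zero_iff by auto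
  ultimately have kk: "k1 \<ge> 1" "k2 \<ge> 1" by auto
  have "c = smul k1 c + smul k2 c" unfolding k1[symmetric] k2[symmetric] by (rule pq(5))
  then show False using prim_split[OF pc _ kk] by blast
qed

definition rayS :: "int \<times> int \<Rightarrow> int \<times> int \<Rightarrow> bool" where
  "rayS a x \<longleftrightarrow> det2 a x = 0 \<and> fst a * fst x + snd a * snd x \<ge> 0"

lemma ray_irr:
  assumes pa: "coprime (fst a) (snd a)" and pv: "coprime (fst v) (snd v)"
    and pq: "rayS a p" "rayS a q" "p \<noteq> 0" "q \<noteq> 0" "v = p + q"
  shows False
proof -
  have pa0: "det2 p a = 0" "det2 q a = 0" using pq(1,2) det2_swap[of p a] det2_swap[of q a] by (auto simp: rayS_def)
  obtain k1 where k1: "p = smul k1 a" using line_coef[OF pa pa0(1)] by blast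
  obtain k2 where k2: "q = smul k2 a" using line_coef[OF pa pa0(2)] by blast
  note k = k1 k2
  have a0: "fst a * fst a + snd a * snd a > 0"
  proof -
    have "a \<noteq> 0" using pa by (auto simp: zero_prod_def)
    then have "fst a \<noteq> 0 \<or> snd a \<noteq> 0" by (auto simp: prod_eq_iff)
    then show ?thesis by (rule sq_pos)
  qed
  have "k1 * (fst a * fst a + snd a * snd a) \<ge> 0" "k2 * (fst a * fst a + snd a * snd a) \<ge> 0"
    using pq(1,2) k by (auto simp: rayS_def smul_def algebra_simps)
  then have "k1 \<ge> 0" "k2 \<ge> 0" using a0 by (simp_all add: zero_le_mult_iff)
  moreover have "k1 \<noteq> 0" "k2 \<noteq> 0" using pq(3,4) k smul_zero_iff by auto
  ultimately show False using prim_split[OF pv, of k1 a k2] pq(5) k by auto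
qed


locale galegeo =
  fixes n :: nat and w :: "nat \<Rightarrow> int \<times> int"
  assumes prim: "\<And>j. j < n \<Longrightarrow> coprime (fst (w j)) (snd (w j))"
    and span: "\<And>l. l \<noteq> 0 \<Longrightarrow> \<exists>j<n. det2 l (w j) < 0"
begin

definition Pset where "Pset l y \<longleftrightarrow> (\<forall>j<n. det2 y (w j) \<le> max 0 (det2 l (w j)))"
definition Conf where "Conf l y \<longleftrightarrow> (\<forall>j<n. min 0 (det2 l (w j)) \<le> det2 y (w j) \<and> det2 y (w j) \<le> max 0 (det2 l (w j)))"
definition Graver where "Graver l \<longleftrightarrow> l \<noteq> 0 \<and> (\<forall>y. Conf l y \<longrightarrow> y = 0 \<or> y = l)"
definition Indisp where "Indisp l \<longleftrightarrow> (\<forall>y. Pset l y \<longrightarrow> y = 0 \<or> y = l)"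
definition Wfree where "Wfree y z \<longleftrightarrow> (\<forall>j<n. \<not> (det2 y (w j) > 0 \<and> det2 (w j) z > 0))"

lemma span_pos: "l \<noteq> 0 \<Longrightarrow> \<exists>j<n. det2 l (w j) > 0"
  using span[of "- l"] by (auto simp: det2_neg1)

lemma w_nz: "j < n \<Longrightarrow> w j \<noteq> 0"
  using prim[of j] by (auto simp: zero_prod_def)

lemma prim_neg: "j < n \<Longrightarrow> coprime (fst (- w j)) (snd (- w j))"
  using prim[of j] by simp

lemma graver_w:
  assumes i: "i < n"
  shows "Graver (w i)"
  unfolding Graver_def
proof (intro conjI allI impI)
  show "w i \<noteq> 0" using w_nz i .
  fix y assume C: "Conf (w i) y"
  have "det2 y (w i) = 0" using C i by (auto simp: Conf_def det2_self)
  then obtain k where k: "y = (k * fst (w i), k * snd (w i))" using bezout_line prim i by blast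
  obtain j where j: "j < n" "det2 (w i) (w j) > 0" using span_pos w_nz i by blast
  have dy: "det2 y (w j) = k * det2 (w i) (w j)" using k by (simp add: det2_def algebra_simps)
  have "0 \<le> det2 y (w j)" "det2 y (w j) \<le> det2 (w i) (w j)" using C j by (auto simp: Conf_def)
  then have "0 \<le> k * det2 (w i) (w j)" "k * det2 (w i) (w j) \<le> 1 * det2 (w i) (w j)"
    using dy by auto
  then have "0 \<le> k" "k \<le> 1" using j(2) by (simp_all add: zero_le_mult_iff mult_le_cancel_right)
  then have "k = 0 \<or> k = 1" by auto
  then show "y = 0 \<or> y = w i" using k by (auto simp: zero_prod_def)
qed

lemma graver_neg: "Graver l \<Longrightarrow> Graver (- l)"
  unfolding Graver_def
proof (intro conjI allI impI)
  assume G: "l \<noteq> 0 \<and> (\<forall>y. Conf l y \<longrightarrow> y = 0 \<or> y = l)"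
  then show "- l \<noteq> 0" by simp
  fix y assume "Conf (- l) y"
  then have "Conf l (- y)" by (auto simp: Conf_def det2_neg1)
  then have "- y = 0 \<or> - y = l" using G by blast
  then show "y = 0 \<or> y = - l" by auto
qed

lemma dir1_pos:
  assumes ac: "det2 a c > 0" and WF: "Wfree a c" and i: "i < n"
    and GI: "\<forall>l. Graver l \<longrightarrow> Indisp l"
    and y: "inS a c y" "y \<noteq> 0" and z: "inS a c z" "z \<noteq> 0" and sum: "- w i = y + z"
    and yz: "det2 y z > 0"
  shows False
proof -
  have wi: "w i = - (y + z)" using sum by (metis minus_minus)
  have a0: "a \<noteq> 0" "c \<noteq> 0" using ac det2_zero1[of c] det2_zero2[of a] by auto
  have P: "Pset (w i) (- z)"
    unfolding Pset_def
  proof (intro allI impI)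
    fix j assume j: "j < n"
    show "det2 (- z) (w j) \<le> max 0 (det2 (w i) (w j))"
    proof (rule ccontr)
      assume "\<not> ?thesis"
      then have "\<not> - det2 z (w j) \<le> max 0 (- (det2 y (w j) + det2 z (w j)))"
        unfolding wi det2_neg1 det2_add1 .
      then have "det2 z (w j) < 0" "det2 y (w j) > 0" by linarith+
      then have h1: "det2 y (w j) > 0" "det2 (w j) z > 0" by (auto simp: det2_swap[of "w j" z])
      have "det2 a (w j) > 0 \<and> det2 (w j) c > 0"
        by (rule interior[OF yz y(1) z(1) h1 a0])
      then show False using WF j by (auto simp: Wfree_def)
    qed
  qed
  have "Indisp (w i)" using GI graver_w[OF i] by blast
  then have "- z = 0 \<or> - z = w i" using P unfolding Indisp_def by blast
  moreover have "- z \<noteq> 0" using z by simp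
  moreover have "- z \<noteq> w i"
  proof
    assume "- z = w i"
    then have "y + z = z" using sum by (metis minus_minus)
    then show False using y(2) by simp
  qed
  ultimately show False by blast
qed

lemma dir1_sector:
  assumes ac: "det2 a c > 0" and WF: "Wfree a c" and i: "i < n"
    and GI: "\<forall>l. Graver l \<longrightarrow> Indisp l" and v: "inS a c (- w i)"
  shows "irrS a c (- w i)"
  unfolding irrS_def
proof
  assume "\<exists>p q. inS a c p \<and> inS a c q \<and> p \<noteq> 0 \<and> q \<noteq> 0 \<and> - w i = p + q"
  then obtain p q where pq: "inS a c p" "inS a c q" "p \<noteq> 0" "q \<noteq> 0" "- w i = p + q" by blast
  consider "det2 p q > 0" | "det2 p q < 0" | "det2 p q = 0" by linarith
  then show False
  proof cases
    case 1 then show ?thesis using dir1_pos[OF ac WF i GI pq(1,3,2,4,5)] by blast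
  next
    case 2
    have "- w i = q + p" using pq(5) by (simp add: add.commute)
    moreover have "det2 q p > 0" using 2 det2_swap[of q p] by simp
    ultimately show ?thesis using dir1_pos[OF ac WF i GI pq(2,4,1,3)] by blast
  next
    case 3
    have "det2 p (- w i) = 0" using 3 pq(5) by (simp add: det2_lin)
    then obtain k where k: "p = smul k (- w i)" using line_coef prim_neg[OF i] by blast
    have qk: "q = smul (1 - k) (- w i)"
      using k pq(5) by (simp add: smul_def prod_eq_iff algebra_simps)
    have wn: "- w i \<noteq> 0" using w_nz[OF i] by simp
    have "k \<ge> 1"
    proof (rule ccontr)
      assume "\<not> k \<ge> 1"
      then have "k = 0 \<or> k < 0" by linarith
      then show False
        using pq(1,3) k smul_zero_iff pointed_neg[OF ac v, of k] wn by auto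
    qed
    moreover have "1 - k \<ge> 1"
    proof (rule ccontr)
      assume "\<not> 1 - k \<ge> 1"
      then have "1 - k = 0 \<or> 1 - k < 0" by linarith
      then show False
        using pq(2,4) qk smul_zero_iff pointed_neg[OF ac v, of "1 - k"] wn by auto
    qed
    ultimately show False by linarith
  qed
qed

lemma desc_step:
  assumes pq: "det2 p q > 0" "inS y z p" "inS y z q" and yz: "y \<noteq> 0" "z \<noteq> 0"
    and WF: "Wfree y z"
    and IR: "\<forall>i<n. det2 y (- w i) > 0 \<and> det2 (- w i) z > 0 \<longrightarrow> irrS y z (- w i)"
  shows "Wfree p q" "\<forall>i<n. det2 p (- w i) > 0 \<and> det2 (- w i) q > 0 \<longrightarrow> irrS p q (- w i)"
proof -
  show "Wfree p q" unfolding Wfree_def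
  proof (intro allI impI notI)
    fix j assume j: "j < n" and h: "0 < det2 p (w j) \<and> 0 < det2 (w j) q"
    then have "det2 y (w j) > 0 \<and> det2 (w j) z > 0" using interior[OF pq _ _ yz] by blast
    then show False using WF j by (auto simp: Wfree_def)
  qed
  show "\<forall>i<n. det2 p (- w i) > 0 \<and> det2 (- w i) q > 0 \<longrightarrow> irrS p q (- w i)"
  proof (intro allI impI)
    fix i assume i: "i < n" and h: "det2 p (- w i) > 0 \<and> det2 (- w i) q > 0"
    then have "det2 y (- w i) > 0 \<and> det2 (- w i) z > 0" using interior[OF pq _ _ yz] by blast
    then have ir: "irrS y z (- w i)" using IR i by blast
    show "irrS p q (- w i)" unfolding irrS_def
    proof
      assume "\<exists>p' q'. inS p q p' \<and> inS p q q' \<and> p' \<noteq> 0 \<and> q' \<noteq> 0 \<and> - w i = p' + q'"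
      then obtain p' q' where "inS p q p'" "inS p q q'" "p' \<noteq> 0" "q' \<noteq> 0" "- w i = p' + q'" by blast
      then show False using ir subsector[OF pq] unfolding irrS_def by blast
    qed
  qed
qed

lemma desc:
  assumes G: "Graver l"
  shows "det2 y z = int D \<Longrightarrow> 0 < D \<Longrightarrow> y + z = l \<Longrightarrow> Wfree y z
    \<Longrightarrow> (\<forall>i<n. det2 y (- w i) > 0 \<and> det2 (- w i) z > 0 \<longrightarrow> irrS y z (- w i)) \<Longrightarrow> False"
proof (induction D arbitrary: y z rule: less_induct)
  case (less D)
  note D = less.prems(1,2) and sum = less.prems(3) and WF = less.prems(4) and IR = less.prems(5)
  have y0: "y \<noteq> 0" using D det2_zero1[of z] by auto
  have z0: "z \<noteq> 0" using D det2_zero2[of y] by auto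
  have Gl: "l \<noteq> 0" "\<And>u. Conf l u \<Longrightarrow> u = 0 \<or> u = l" using G by (auto simp: Graver_def)
  show False
  proof (cases "\<exists>i<n. det2 y (- w i) > 0 \<and> det2 (- w i) z > 0")
    case False
    have "Conf l y" unfolding Conf_def
    proof (intro allI impI)
      fix j assume j: "j < n"
      have dl: "det2 l (w j) = det2 y (w j) + det2 z (w j)" using sum by (auto simp: det2_add1)
      have h1: "\<not> (det2 y (w j) > 0 \<and> det2 z (w j) < 0)"
        using WF j det2_swap[of "w j" z] by (auto simp: Wfree_def)
      have h2: "\<not> (det2 y (w j) < 0 \<and> det2 z (w j) > 0)"
        using False j det2_swap[of "- w j" z] by (auto simp: det2_neg1 det2_neg2)
      show "min 0 (det2 l (w j)) \<le> det2 y (w j) \<and> det2 y (w j) \<le> max 0 (det2 l (w j))"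
        using dl h1 h2 by linarith
    qed
    then have "y = 0 \<or> y = l" using Gl by blast
    then show False using y0 z0 sum by auto
  next
    case True
    then obtain i where i: "i < n" "det2 y (- w i) > 0" "det2 (- w i) z > 0" by blast
    define v where "v = - w i"
    have ir: "irrS y z v" using IR i unfolding v_def by blast
    have vi: "det2 y v > 0" "det2 v z > 0" using i unfolding v_def by auto
    have Dz: "det2 y z > 0" using D by simp
    have inSy: "inS y z y" "inS y z z" using Dz by (auto simp: inS_def det2_self)
    have inSv: "inS y z v" using vi by (auto simp: inS_def)
    have v0: "v \<noteq> 0" using w_nz[OF i(1)] unfolding v_def by simp
    have e1: "det2 v z < det2 y z"
    proof (rule ccontr)
      assume "\<not> ?thesis"
      then have "inS y z (v - y)" using vi by (auto simp: inS_def det2_lin)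
      moreover have "v - y \<noteq> 0" using vi det2_self[of y] by auto
      moreover have "v = y + (v - y)" by simp
      ultimately show False using ir inSy y0 unfolding irrS_def by blast
    qed
    have e2: "det2 y v < det2 y z"
    proof (rule ccontr)
      assume "\<not> ?thesis"
      then have "inS y z (v - z)" using vi by (auto simp: inS_def det2_lin)
      moreover have "v - z \<noteq> 0" using vi det2_self[of z] by auto
      moreover have "v = (v - z) + z" by simp
      ultimately show False using ir inSy z0 unfolding irrS_def by blast
    qed
    have inSlv: "inS y z (l - v)" using e1 e2 sum[symmetric] by (auto simp: inS_def det2_lin)
    have cr: "det2 y z * det2 v x = det2 v z * det2 y x + det2 y v * det2 z x" for x
      using cramer_det2[of y z v x] by simp
    have dvl: "det2 v (l - v) = det2 v z - det2 y v"
      using sum[symmetric] det2_swap[of v y] by (simp add: det2_lin)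
    consider "det2 v z = det2 y v" | "det2 v z > det2 y v" | "det2 v z < det2 y v" by linarith
    then show False
    proof cases
      case 1
      have "Conf l v" unfolding Conf_def
      proof (intro allI impI)
        fix j assume j: "j < n"
        have "det2 y z * det2 v (w j) = det2 v z * det2 l (w j)"
          using cr[of "w j"] 1 sum[symmetric] by (simp add: det2_add1 algebra_simps)
        then show "min 0 (det2 l (w j)) \<le> det2 v (w j) \<and> det2 v (w j) \<le> max 0 (det2 l (w j))"
          using small_conf[of "det2 y z" "det2 v z"] Dz vi e1 by simp
      qed
      then have "v = 0 \<or> v = l" using Gl by blast
      moreover have "v \<noteq> l" using ir inSy y0 z0 sum unfolding irrS_def by blast
      ultimately show False using v0 by blast
    next
      case 2
      define D' where "D' = nat (det2 v z - det2 y v)"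
      have D': "det2 v (l - v) = int D'" "0 < D'" "D' < D" using 2 dvl D e1 vi unfolding D'_def by auto
      have st: "Wfree v (l - v)" "\<forall>i<n. det2 v (- w i) > 0 \<and> det2 (- w i) (l - v) > 0 \<longrightarrow> irrS v (l - v) (- w i)"
        using desc_step[of v "l - v" y z] D' inSv inSlv y0 z0 WF IR by auto
      show False using less.IH[OF D'(3) D'(1,2) _ st] by simp
    next
      case 3
      define D' where "D' = nat (det2 y v - det2 v z)"
      have dd: "det2 (l - v) v = det2 y v - det2 v z" using dvl det2_swap[of "l - v" v] by simp
      have D': "det2 (l - v) v = int D'" "0 < D'" "D' < D" using 3 dd D e2 vi unfolding D'_def by auto
      have st: "Wfree (l - v) v" "\<forall>i<n. det2 (l - v) (- w i) > 0 \<and> det2 (- w i) v > 0 \<longrightarrow> irrS (l - v) v (- w i)"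
        using desc_step[of "l - v" v y z] D' inSv inSlv y0 z0 WF IR by auto
      show False using less.IH[OF D'(3) D'(1,2) _ st] by simp
    qed
  qed
qed

lemma pset_char:
  assumes "Pset l y" "j < n"
  shows "\<not> (det2 y (w j) > 0 \<and> det2 (l - y) (w j) < 0)"
  using assms by (auto simp: Pset_def det2_diff1)

lemma dir2:
  assumes H: "\<forall>i<n. \<forall>y z. det2 y z > 0 \<and> Wfree y z \<and> det2 y (- w i) > 0 \<and> det2 (- w i) z > 0 \<longrightarrow> irrS y z (- w i)"
    and G: "Graver l"
  shows "Indisp l"
  unfolding Indisp_def
proof (intro allI impI)
  fix y assume P: "Pset l y"
  show "y = 0 \<or> y = l"
  proof (rule ccontr)
    assume ne: "\<not> (y = 0 \<or> y = l)"
    define z where "z = l - y"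
    have sum: "y + z = l" unfolding z_def by simp
    have Pc: "\<And>j. j < n \<Longrightarrow> \<not> (det2 y (w j) > 0 \<and> det2 z (w j) < 0)"
      using pset_char[OF P] unfolding z_def by blast
    have Gl: "l \<noteq> 0" "\<And>u. Conf l u \<Longrightarrow> u = 0 \<or> u = l" using G by (auto simp: Graver_def)
    consider "det2 y z > 0" | "det2 y z < 0" | "det2 y z = 0" by linarith
    then show False
    proof cases
      case 1
      have WF: "Wfree y z" unfolding Wfree_def using Pc det2_swap by (metis neg_0_less_iff_less)
      show False
        using desc[OF G, of y z "nat (det2 y z)"] 1 sum WF H by auto
    next
      case 2
      have WF: "Wfree (- z) (- y)" unfolding Wfree_def
      proof (intro allI impI notI)
        fix j assume j: "j < n" and h: "0 < det2 (- z) (w j) \<and> 0 < det2 (w j) (- y)"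
        then have "det2 z (w j) < 0" "det2 y (w j) > 0"
          using det2_swap[of "w j" y] by (auto simp: det2_neg1 det2_neg2)
        then show False using Pc j by blast
      qed
      have d: "det2 (- z) (- y) > 0" using 2 det2_swap[of z y] by (simp add: det2_neg1 det2_neg2)
      have s2: "- z + - y = - l" using sum by (simp add: algebra_simps)
      show False
        using desc[OF graver_neg[OF G], of "- z" "- y" "nat (det2 (- z) (- y))"] d s2 WF H by auto
    next
      case 3
      have dyl: "det2 y l = 0" using 3 sum[symmetric] by (simp add: det2_add2 det2_self)
      have id1: "fst l * det2 y x = fst y * det2 l x" for x
      proof -
        have "fst l * det2 y x - fst y * det2 l x = fst x * det2 y l" by (simp add: det2_def algebra_simps)
        then show ?thesis using dyl by simp
      qed
      have id2: "snd l * det2 y x = snd y * det2 l x" for x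
      proof -
        have "snd l * det2 y x - snd y * det2 l x = snd x * det2 y l" by (simp add: det2_def algebra_simps)
        then show ?thesis using dyl by simp
      qed
      obtain L Y where LY: "L > 0" "\<And>x. L * det2 y x = Y * det2 l x"
      proof -
        have "fst l \<noteq> 0 \<or> snd l \<noteq> 0" using Gl(1) by (auto simp: prod_eq_iff)
        then consider "fst l > 0" | "fst l < 0" | "snd l > 0" | "snd l < 0" by linarith
        then show ?thesis
        proof cases
          case 1 then show ?thesis using that[of "fst l" "fst y"] id1 by blast
        next
          case 2 then show ?thesis using that[of "- fst l" "- fst y"] id1 by (metis mult_minus_left neg_0_less_iff_less)
        next
          case 3 then show ?thesis using that[of "snd l" "snd y"] id2 by blast
        next
          case 4 then show ?thesis using that[of "- snd l" "- snd y"] id2 by (metis mult_minus_left neg_0_less_iff_less)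
        qed
      qed
      obtain j1 where j1: "j1 < n" "det2 l (w j1) < 0" using span Gl(1) by blast
      obtain j2 where j2: "j2 < n" "det2 l (w j2) > 0" using span_pos Gl(1) by blast
      have p1: "det2 y (w j1) \<le> 0" using P j1 by (auto simp: Pset_def)
      have p2: "det2 y (w j2) \<le> det2 l (w j2)" using P j2 by (auto simp: Pset_def)
      have Y0: "Y \<ge> 0"
      proof (rule ccontr)
        assume "\<not> Y \<ge> 0"
        then have "Y * det2 l (w j1) > 0" using j1 by (simp add: mult_neg_neg)
        moreover have "L * det2 y (w j1) \<le> 0" using p1 LY(1) by (simp add: mult_nonneg_nonpos)
        ultimately show False using LY(2)[of "w j1"] by simp
      qed
      have YL: "Y \<le> L"
      proof (rule ccontr)
        assume "\<not> Y \<le> L"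
        then have "Y * det2 l (w j2) > L * det2 l (w j2)" using j2 by simp
        moreover have "L * det2 y (w j2) \<le> L * det2 l (w j2)" using p2 LY(1) by simp
        ultimately show False using LY(2)[of "w j2"] by simp
      qed
      have "Conf l y" unfolding Conf_def
        using small_conf[OF LY(1) Y0 YL LY(2)] by blast
      then show False using Gl ne by blast
    qed
  qed
qed

end

section \<open>Angles\<close>

definition ang :: "int \<times> int \<Rightarrow> real" where
  "ang u = Arg (to_complex u)"

lemma to_complex_nz: "u \<noteq> 0 \<Longrightarrow> to_complex u \<noteq> 0"
  by (auto simp: to_complex_def complex_eq_iff prod_eq_iff)

lemma re_im_tc: "Re (to_complex u) = of_int (fst u)" "Im (to_complex u) = of_int (snd u)"
  by (simp_all add: to_complex_def)

lemma polar_u: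
  "real_of_int (fst u) = cmod (to_complex u) * cos (ang u)"
  "real_of_int (snd u) = cmod (to_complex u) * sin (ang u)"
proof -
  have "rcis (cmod (to_complex u)) (Arg (to_complex u)) = to_complex u" by (rule rcis_cmod_Arg)
  then have "Re (to_complex u) = cmod (to_complex u) * cos (ang u)"
    "Im (to_complex u) = cmod (to_complex u) * sin (ang u)"
    unfolding ang_def by (metis Re_rcis, metis Im_rcis)
  then show "real_of_int (fst u) = cmod (to_complex u) * cos (ang u)"
    "real_of_int (snd u) = cmod (to_complex u) * sin (ang u)" by (simp_all add: re_im_tc)
qed

lemma det_sin: "real_of_int (det2 u v) = cmod (to_complex u) * cmod (to_complex v) * sin (ang v - ang u)"
proof -
  have "real_of_int (det2 u v) = real_of_int (fst u) * real_of_int (snd v) - real_of_int (snd u) * real_of_int (fst v)"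
    by (simp add: det2_def)
  also have "\<dots> = cmod (to_complex u) * cmod (to_complex v) * (sin (ang v) * cos (ang u) - cos (ang v) * sin (ang u))"
    unfolding polar_u by (simp add: algebra_simps)
  finally show ?thesis by (simp add: sin_diff)
qed

lemma dot_cos: "real_of_int (fst u * fst v + snd u * snd v) = cmod (to_complex u) * cmod (to_complex v) * cos (ang v - ang u)"
proof -
  have "real_of_int (fst u * fst v + snd u * snd v) = real_of_int (fst u) * real_of_int (fst v) + real_of_int (snd u) * real_of_int (snd v)"
    by simp
  also have "\<dots> = cmod (to_complex u) * cmod (to_complex v) * (cos (ang v) * cos (ang u) + sin (ang v) * sin (ang u))"
    unfolding polar_u by (simp add: algebra_simps)
  finally show ?thesis by (simp add: cos_diff)
qed

lemma ang_bounds: "- pi < ang u" "ang u \<le> pi"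
  using Arg_bounded unfolding ang_def by auto

lemma det_pos_iff: "u \<noteq> 0 \<Longrightarrow> v \<noteq> 0 \<Longrightarrow> det2 u v > 0 \<longleftrightarrow> sin (ang v - ang u) > 0"
proof -
  assume "u \<noteq> 0" "v \<noteq> 0"
  then have p: "cmod (to_complex u) * cmod (to_complex v) > 0" using to_complex_nz by simp
  have "det2 u v > 0 \<longleftrightarrow> real_of_int (det2 u v) > 0" by simp
  also have "\<dots> \<longleftrightarrow> cmod (to_complex u) * cmod (to_complex v) * 0 < cmod (to_complex u) * cmod (to_complex v) * sin (ang v - ang u)"
    unfolding det_sin by simp
  also have "\<dots> \<longleftrightarrow> sin (ang v - ang u) > 0" by (rule mult_less_cancel_left_pos[OF p])
  finally show ?thesis .
qed

lemma det_nonneg_iff: "u \<noteq> 0 \<Longrightarrow> v \<noteq> 0 \<Longrightarrow> det2 u v \<ge> 0 \<longleftrightarrow> sin (ang v - ang u) \<ge> 0"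
proof -
  assume "u \<noteq> 0" "v \<noteq> 0"
  then have p: "cmod (to_complex u) * cmod (to_complex v) > 0" using to_complex_nz by simp
  have "det2 u v \<ge> 0 \<longleftrightarrow> real_of_int (det2 u v) \<ge> 0" by simp
  also have "\<dots> \<longleftrightarrow> cmod (to_complex u) * cmod (to_complex v) * 0 \<le> cmod (to_complex u) * cmod (to_complex v) * sin (ang v - ang u)"
    unfolding det_sin by simp
  also have "\<dots> \<longleftrightarrow> sin (ang v - ang u) \<ge> 0" by (rule mult_le_cancel_left_pos[OF p])
  finally show ?thesis .
qed

lemma same_ang:
  assumes "u \<noteq> 0" "v \<noteq> 0" "ang u = ang v"
  shows "det2 u v = 0" "fst u * fst v + snd u * snd v > 0"
proof -
  have p: "cmod (to_complex u) * cmod (to_complex v) > 0" using assms to_complex_nz by simp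
  have "real_of_int (det2 u v) = 0" unfolding det_sin using assms by simp
  then show "det2 u v = 0" by simp
  have "real_of_int (fst u * fst v + snd u * snd v) > 0" unfolding dot_cos using assms p by simp
  then show "fst u * fst v + snd u * snd v > 0" by linarith
qed

lemma sin_pos_neg_range: "- 2 * pi < x \<Longrightarrow> x \<le> 0 \<Longrightarrow> sin x > 0 \<Longrightarrow> x < - pi"
proof (rule ccontr)
  assume a: "- 2 * pi < x" "x \<le> 0" "sin x > 0" "\<not> x < - pi"
  have "x \<noteq> 0" using a(3) by auto
  then have "sin (x + 2 * pi) \<le> 0" using a by (intro sin_le_zero) auto
  then show False using a by simp
qed

lemma sin_pos_pos_range: "0 \<le> x \<Longrightarrow> x < 2 * pi \<Longrightarrow> sin x > 0 \<Longrightarrow> x < pi"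
  using sin_le_zero[of x] by (cases "x < pi") auto

lemma sin_gt1: "0 < x \<Longrightarrow> x < pi \<Longrightarrow> sin x > 0" by (rule sin_gt_zero)
lemma sin_gt2: "- 2 * pi < x \<Longrightarrow> x < - pi \<Longrightarrow> sin x > 0"
  using sin_gt_zero[of "x + 2 * pi"] by simp
lemma sin_ge1: "0 \<le> x \<Longrightarrow> x \<le> pi \<Longrightarrow> sin x \<ge> 0" by (rule sin_ge_zero)
lemma sin_ge2: "- 2 * pi \<le> x \<Longrightarrow> x \<le> - pi \<Longrightarrow> sin x \<ge> 0"
  using sin_ge_zero[of "x + 2 * pi"] by simp
lemma sin_lt1: "pi < x \<Longrightarrow> x < 2 * pi \<Longrightarrow> sin x < 0" by (rule sin_lt_zero)

lemma prim_eq: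
  assumes pu: "coprime (fst u) (snd u)" and pv: "coprime (fst v) (snd v)"
    and d: "det2 u v = 0" and dot: "fst u * fst v + snd u * snd v > 0"
  shows "u = v"
proof -
  obtain k where k: "u = smul k v" using line_coef[OF pv d] by blast
  have "k * (fst v * fst v + snd v * snd v) > 0" using dot k by (simp add: smul_def algebra_simps)
  moreover have "fst v * fst v + snd v * snd v \<ge> 0" by simp
  ultimately have "k > 0" by (simp add: zero_less_mult_iff)
  moreover have "k = 1 \<or> k = -1" using prim_mult[OF pu, of k v] k by (simp add: smul_def)
  ultimately show ?thesis using k by (simp add: smul_def)
qed

section \<open>Cone monoids\<close>

lemma cm_sector:
  assumes ac: "det2 a c > 0"
  shows "x \<in> cone_monoid a c \<longleftrightarrow> inS a c x"
proof
  assume "x \<in> cone_monoid a c"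
  then obtain s t :: real where st: "s \<ge> 0" "t \<ge> 0"
    "of_int (fst x) = s * of_int (fst a) + t * of_int (fst c)"
    "of_int (snd x) = s * of_int (snd a) + t * of_int (snd c)"
    unfolding cone_monoid_def by blast
  have "real_of_int (det2 a x) = t * real_of_int (det2 a c)"
    unfolding det2_def using st by (simp add: algebra_simps)
  moreover have "real_of_int (det2 x c) = s * real_of_int (det2 a c)"
    unfolding det2_def using st by (simp add: algebra_simps)
  ultimately have "real_of_int (det2 a x) \<ge> 0" "real_of_int (det2 x c) \<ge> 0"
    using st ac by simp_all
  then show "inS a c x" unfolding inS_def by simp
next
  assume i: "inS a c x"
  define D where "D = real_of_int (det2 a c)"
  have D: "D > 0" using ac D_def by simp
  define s where "s = real_of_int (det2 x c) / D"
  define t where "t = real_of_int (det2 a x) / D"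
  have "s \<ge> 0" "t \<ge> 0" using i D unfolding s_def t_def inS_def by auto
  moreover have "of_int (fst x) = s * of_int (fst a) + t * of_int (fst c)"
  proof -
    have "real_of_int (det2 a c * fst x) = real_of_int (det2 x c * fst a + det2 a x * fst c)"
      using cramer_fst[of a c x] by simp
    then have "D * of_int (fst x) = of_int (det2 x c) * of_int (fst a) + of_int (det2 a x) * of_int (fst c)"
      unfolding D_def by simp
    then show ?thesis using D unfolding s_def t_def by (simp add: field_simps)
  qed
  moreover have "of_int (snd x) = s * of_int (snd a) + t * of_int (snd c)"
  proof -
    have "real_of_int (det2 a c * snd x) = real_of_int (det2 x c * snd a + det2 a x * snd c)"
      using cramer_snd[of a c x] by simp
    then have "D * of_int (snd x) = of_int (det2 x c) * of_int (snd a) + of_int (det2 a x) * of_int (snd c)"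
      unfolding D_def by simp
    then show ?thesis using D unfolding s_def t_def by (simp add: field_simps)
  qed
  ultimately show "x \<in> cone_monoid a c" unfolding cone_monoid_def by blast
qed

lemma cm_ray:
  assumes a0: "a \<noteq> 0"
  shows "x \<in> cone_monoid a a \<longleftrightarrow> rayS a x"
proof
  assume "x \<in> cone_monoid a a"
  then obtain s t :: real where st: "s \<ge> 0" "t \<ge> 0"
    "of_int (fst x) = s * of_int (fst a) + t * of_int (fst a)"
    "of_int (snd x) = s * of_int (snd a) + t * of_int (snd a)"
    unfolding cone_monoid_def by blast
  have "real_of_int (det2 a x) = 0"
    unfolding det2_def using st by (simp add: algebra_simps)
  moreover have "real_of_int (fst a * fst x + snd a * snd x) = (s + t) * (of_int (fst a) ^ 2 + of_int (snd a) ^ 2)"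
    using st by (simp add: algebra_simps power2_eq_square)
  then have "real_of_int (fst a * fst x + snd a * snd x) \<ge> 0" using st by simp
  then have "fst a * fst x + snd a * snd x \<ge> 0" by (metis of_int_0_le_iff)
  ultimately show "rayS a x" unfolding rayS_def by simp
next
  assume r: "rayS a x"
  define N where "N = real_of_int (fst a * fst a + snd a * snd a)"
  have "fst a \<noteq> 0 \<or> snd a \<noteq> 0" using a0 by (auto simp: prod_eq_iff)
  then have N: "N > 0" unfolding N_def using sq_pos by (metis of_int_0_less_iff)
  define s where "s = real_of_int (fst a * fst x + snd a * snd x) / N"
  have "real_of_int (fst a * fst x + snd a * snd x) \<ge> 0" using r unfolding rayS_def by (metis of_int_0_le_iff)
  then have s0: "s \<ge> 0" using N unfolding s_def by (rule divide_nonneg_pos)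
  have id1: "(fst a * fst a + snd a * snd a) * fst x = (fst a * fst x + snd a * snd x) * fst a - snd a * det2 a x"
    by (simp add: det2_def algebra_simps)
  have id2: "(fst a * fst a + snd a * snd a) * snd x = (fst a * fst x + snd a * snd x) * snd a + fst a * det2 a x"
    by (simp add: det2_def algebra_simps)
  have "of_int (fst x) = s * of_int (fst a) + 0 * of_int (fst a)"
  proof -
    have "N * of_int (fst x) = of_int (fst a * fst x + snd a * snd x) * of_int (fst a)"
      using arg_cong[OF id1, of real_of_int] r unfolding N_def rayS_def by simp
    then show ?thesis using N unfolding s_def by (simp add: field_simps)
  qed
  moreover have "of_int (snd x) = s * of_int (snd a) + 0 * of_int (snd a)"
  proof -
    have "N * of_int (snd x) = of_int (fst a * fst x + snd a * snd x) * of_int (snd a)"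
      using arg_cong[OF id2, of real_of_int] r unfolding N_def rayS_def by simp
    then show ?thesis using N unfolding s_def by (simp add: field_simps)
  qed
  ultimately show "x \<in> cone_monoid a a" unfolding cone_monoid_def using s0
    by (intro CollectI exI[of _ s] exI[of _ "0::real"]) simp
qed

lemma hb_sector:
  assumes ac: "det2 a c > 0"
  shows "hilbert_basis (cone_monoid a c) = Irr (cone_monoid a c)"
proof (rule hb_eq_irr[where hgt = "\<lambda>x. det2 a x + det2 x c"])
  show "x + y \<in> cone_monoid a c" if "x \<in> cone_monoid a c" "y \<in> cone_monoid a c" for x y
    using that unfolding cm_sector[OF ac] inS_def by (simp add: det2_add1 det2_add2)
  show "0 < det2 a x + det2 x c" if "x \<in> cone_monoid a c" "x \<noteq> 0" for x
  proof -
    have i: "det2 a x \<ge> 0" "det2 x c \<ge> 0" using that unfolding cm_sector[OF ac] inS_def by auto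
    show ?thesis
    proof (rule ccontr)
      assume "\<not> ?thesis"
      then have "det2 a x = 0" "det2 x c = 0" using i by auto
      then show False using pointed[OF ac] that(2) by blast
    qed
  qed
  show "det2 a (x + y) + det2 (x + y) c = det2 a x + det2 x c + (det2 a y + det2 y c)" for x y
    by (simp add: det2_add1 det2_add2)
  show "0 \<in> cone_monoid a c" unfolding cm_sector[OF ac] inS_def by (simp add: det2_zero1 det2_zero2)
qed

lemma hb_ray:
  assumes a0: "a \<noteq> 0"
  shows "hilbert_basis (cone_monoid a a) = Irr (cone_monoid a a)"
proof (rule hb_eq_irr[where hgt = "\<lambda>x. fst a * fst x + snd a * snd x"])
  show "x + y \<in> cone_monoid a a" if "x \<in> cone_monoid a a" "y \<in> cone_monoid a a" for x y
    using that unfolding cm_ray[OF a0] rayS_def by (simp add: det2_add2 algebra_simps)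
  show "0 < fst a * fst x + snd a * snd x" if "x \<in> cone_monoid a a" "x \<noteq> 0" for x
  proof -
    have r: "det2 a x = 0" "fst a * fst x + snd a * snd x \<ge> 0" using that unfolding cm_ray[OF a0] rayS_def by auto
    show ?thesis
    proof (rule ccontr)
      assume "\<not> ?thesis"
      then have d0: "fst a * fst x + snd a * snd x = 0" using r by auto
      have id1: "(fst a * fst a + snd a * snd a) * fst x = (fst a * fst x + snd a * snd x) * fst a - snd a * det2 a x"
        by (simp add: det2_def algebra_simps)
      have id2: "(fst a * fst a + snd a * snd a) * snd x = (fst a * fst x + snd a * snd x) * snd a + fst a * det2 a x"
        by (simp add: det2_def algebra_simps)
      have "fst a \<noteq> 0 \<or> snd a \<noteq> 0" using a0 by (auto simp: prod_eq_iff)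
      then have "fst a * fst a + snd a * snd a \<noteq> 0"
        using sq_pos by (metis less_irrefl)
      moreover have "(fst a * fst a + snd a * snd a) * fst x = 0" "(fst a * fst a + snd a * snd a) * snd x = 0"
        using id1 id2 d0 r(1) by simp_all
      ultimately have "fst x = 0" "snd x = 0" by (simp_all only: mult_eq_0_iff) blast+
      then show False using that(2) by (simp add: prod_eq_iff)
    qed
  qed
  show "fst a * fst (x + y) + snd a * snd (x + y) = fst a * fst x + snd a * snd x + (fst a * fst y + snd a * snd y)" for x y
    by (simp add: algebra_simps)
  show "0 \<in> cone_monoid a a" unfolding cm_ray[OF a0] rayS_def by (simp add: det2_zero2)
qed

lemma Irr_sector:
  assumes ac: "det2 a c > 0"
  shows "x \<in> Irr (cone_monoid a c) \<longleftrightarrow> inS a c x \<and> x \<noteq> 0 \<and> irrS a c x"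
  unfolding Irr_def irrS_def mem_Collect_eq cm_sector[OF ac] by (rule refl)

lemma Irr_ray:
  assumes a0: "a \<noteq> 0"
  shows "x \<in> Irr (cone_monoid a a) \<longleftrightarrow> rayS a x \<and> x \<noteq> 0 \<and>
     \<not> (\<exists>p q. rayS a p \<and> rayS a q \<and> p \<noteq> 0 \<and> q \<noteq> 0 \<and> x = p + q)"
  unfolding Irr_def mem_Collect_eq cm_ray[OF a0] by (rule refl)

lemma plucker1: "det2 a v * det2 y c = det2 a y * det2 v c + det2 a c * det2 y v"
  by (simp add: det2_def algebra_simps)
lemma plucker2: "det2 a z * det2 v c = det2 a v * det2 z c + det2 a c * det2 v z"
  by (simp add: det2_def algebra_simps)

locale galeccw = galegeo +
  fixes \<sigma> :: "nat \<Rightarrow> nat"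
  assumes ccw: "ccw_order n w \<sigma>" and n2: "n \<ge> 2"
begin

definition av where "av k = w (\<sigma> k)"
definition cv where "cv k = w (\<sigma> ((k + 1) mod n))"
definition phi where "phi k = ang (w (\<sigma> k))"

lemma sig_lt: "k < n \<Longrightarrow> \<sigma> k < n"
  using ccw unfolding ccw_order_def bij_betw_def by auto

lemma sig_surj: "j < n \<Longrightarrow> \<exists>k<n. \<sigma> k = j"
  using ccw unfolding ccw_order_def bij_betw_def by (metis imageE lessThan_iff)

lemma phi_mono: "i \<le> k \<Longrightarrow> k < n \<Longrightarrow> phi i \<le> phi k"
  using ccw unfolding ccw_order_def phi_def ang_def by blast

lemma phi_bounds: "- pi < phi k" "phi k \<le> pi"
  unfolding phi_def using ang_bounds by auto

lemma av_nz: "k < n \<Longrightarrow> av k \<noteq> 0" unfolding av_def using w_nz sig_lt by blast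
lemma cv_nz: "k < n \<Longrightarrow> cv k \<noteq> 0" unfolding cv_def using w_nz sig_lt n2 by simp
lemma av_prim: "k < n \<Longrightarrow> coprime (fst (av k)) (snd (av k))" unfolding av_def using prim sig_lt by blast
lemma cv_prim: "k < n \<Longrightarrow> coprime (fst (cv k)) (snd (cv k))" unfolding cv_def using prim sig_lt n2 by simp

lemma cv_nonwrap: "k + 1 < n \<Longrightarrow> cv k = av (k + 1)"
  unfolding cv_def av_def by simp
lemma cv_wrap: "k + 1 = n \<Longrightarrow> cv k = av 0"
  unfolding cv_def av_def by simp

lemma ang_av: "ang (av k) = phi k" unfolding av_def phi_def by simp

lemma ang_w: "j < n \<Longrightarrow> \<exists>m<n. ang (w j) = phi m \<and> \<sigma> m = j"
  using sig_surj unfolding phi_def by blast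

lemma wfree_k:
  assumes k: "k < n"
  shows "Wfree (av k) (cv k)"
  unfolding Wfree_def
proof (intro allI impI notI)
  fix j assume j: "j < n" and h: "0 < det2 (av k) (w j) \<and> 0 < det2 (w j) (cv k)"
  obtain m where m: "m < n" "ang (w j) = phi m" using ang_w[OF j] by blast
  have wj: "w j \<noteq> 0" using w_nz j by blast
  have s1: "sin (phi m - phi k) > 0"
    using h det_pos_iff[OF av_nz[OF k] wj] m ang_av by simp
  have bm: "- pi < phi m" "phi m \<le> pi" "- pi < phi k" "phi k \<le> pi" using phi_bounds by auto
  show False
  proof (cases "k + 1 < n")
    case True
    have cvk: "cv k = av (k + 1)" using cv_nonwrap[OF True] .
    have s2: "sin (phi (k + 1) - phi m) > 0"
      using h det_pos_iff[OF wj av_nz[OF True]] m ang_av cvk by simp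
    have b2: "- pi < phi (k + 1)" "phi (k + 1) \<le> pi" using phi_bounds by auto
    have AC: "phi k \<le> phi (k + 1)" using phi_mono True by simp
    show False
    proof (cases "m \<le> k")
      case True
      have "phi m \<le> phi k" using phi_mono True k by simp
      then have "phi m - phi k < - pi" using sin_pos_neg_range[of "phi m - phi k"] s1 bm by simp
      then have "sin (phi (k + 1) - phi m) < 0" using sin_lt1[of "phi (k + 1) - phi m"] AC b2 bm by simp
      then show False using s2 by simp
    next
      case False
      then have "phi (k + 1) \<le> phi m" using phi_mono m(1) by simp
      then have "phi (k + 1) - phi m < - pi" using sin_pos_neg_range[of "phi (k + 1) - phi m"] s2 bm b2 by simp
      then have "sin (phi m - phi k) < 0" using sin_lt1[of "phi m - phi k"] AC b2 bm by simp
      then show False using s1 by simp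
    qed
  next
    case False
    then have kn: "k + 1 = n" using k by simp
    have cvk: "cv k = av 0" using cv_wrap[OF kn] .
    have s2: "sin (phi 0 - phi m) > 0"
      using h det_pos_iff[OF wj av_nz[of 0]] m ang_av cvk n2 by simp
    have b2: "- pi < phi 0" "phi 0 \<le> pi" using phi_bounds by auto
    have "phi 0 \<le> phi m" "phi m \<le> phi k" using phi_mono m(1) k kn by auto
    then have "phi m - phi k < - pi" "phi 0 - phi m < - pi"
      using sin_pos_neg_range[of "phi m - phi k"] sin_pos_neg_range[of "phi 0 - phi m"] s1 s2 bm b2 by auto
    then show False using b2 bm by linarith
  qed
qed

lemma no_halfplane:
  assumes "\<forall>j<n. det2 u (w j) \<ge> 0" "u \<noteq> 0"
  shows False
  using span[OF assms(2)] assms(1) by force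

lemma wrap_pos:
  assumes kn: "k + 1 = n"
  shows "det2 (av k) (cv k) > 0"
proof -
  have k: "k < n" using kn by simp
  have cvk: "cv k = av 0" using cv_wrap[OF kn] .
  have b: "- pi < phi 0" "phi 0 \<le> pi" "- pi < phi k" "phi k \<le> pi" using phi_bounds by auto
  have CA: "phi 0 \<le> phi k" using phi_mono k by simp
  show ?thesis
  proof (cases "phi 0 - phi k < - pi")
    case True
    then have "sin (phi 0 - phi k) > 0" using sin_gt2[of "phi 0 - phi k"] b by simp
    then show ?thesis using det_pos_iff[OF av_nz[OF k] av_nz[of 0]] cvk ang_av n2 by simp
  next
    case False
    have "\<forall>j<n. det2 (av 0) (w j) \<ge> 0"
    proof (intro allI impI)
      fix j assume j: "j < n"
      obtain m where m: "m < n" "ang (w j) = phi m" using ang_w[OF j] by blast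
      have "phi 0 \<le> phi m" "phi m \<le> phi k" using phi_mono m(1) kn by auto
      then have "sin (phi m - phi 0) \<ge> 0" using sin_ge1[of "phi m - phi 0"] False by simp
      then show "det2 (av 0) (w j) \<ge> 0"
        using det_nonneg_iff[OF av_nz[of 0] w_nz[OF j]] m ang_av n2 by simp
    qed
    moreover have "av 0 \<noteq> 0" using av_nz[of 0] n2 by simp
    ultimately have False by (rule no_halfplane)
    then show ?thesis ..
  qed
qed

lemma consec:
  assumes k: "k < n"
  shows "av k = cv k \<or> det2 (av k) (cv k) > 0"
proof (cases "k + 1 < n")
  case False
  then show ?thesis using wrap_pos k by simp
next
  case True
  have cvk: "cv k = av (k + 1)" using cv_nonwrap[OF True] .
  have b: "- pi < phi (k + 1)" "phi (k + 1) \<le> pi" "- pi < phi k" "phi k \<le> pi" using phi_bounds by auto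
  have AC: "phi k \<le> phi (k + 1)" using phi_mono True by simp
  consider "phi (k + 1) = phi k" | "phi (k + 1) - phi k > 0 \<and> phi (k + 1) - phi k < pi"
    | "phi (k + 1) - phi k \<ge> pi" using AC by linarith
  then show ?thesis
  proof cases
    case 1
    have "det2 (av k) (av (k + 1)) = 0" "fst (av k) * fst (av (k + 1)) + snd (av k) * snd (av (k + 1)) > 0"
      using same_ang[OF av_nz[OF k] av_nz[OF True]] 1 ang_av by simp_all
    then have "av k = av (k + 1)" using prim_eq av_prim k True by blast
    then show ?thesis using cvk by simp
  next
    case 2
    then have "sin (phi (k + 1) - phi k) > 0" using sin_gt1 by simp
    then show ?thesis using det_pos_iff[OF av_nz[OF k] av_nz[OF True]] cvk ang_av by simp
  next
    case 3
    have "\<forall>j<n. det2 (av (k + 1)) (w j) \<ge> 0"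
    proof (intro allI impI)
      fix j assume j: "j < n"
      obtain m where m: "m < n" "ang (w j) = phi m" using ang_w[OF j] by blast
      have bm: "- pi < phi m" "phi m \<le> pi" using phi_bounds by auto
      have "sin (phi m - phi (k + 1)) \<ge> 0"
      proof (cases "m \<le> k")
        case True
        then have "phi m \<le> phi k" using phi_mono k by simp
        then show ?thesis using sin_ge2[of "phi m - phi (k + 1)"] 3 bm b by simp
      next
        case False
        then have "phi (k + 1) \<le> phi m" using phi_mono m(1) by simp
        then show ?thesis using sin_ge1[of "phi m - phi (k + 1)"] 3 bm b by simp
      qed
      then show "det2 (av (k + 1)) (w j) \<ge> 0"
        using det_nonneg_iff[OF av_nz[OF True] w_nz[OF j]] m ang_av by simp
    qed
    then have False using av_nz[OF True] by (rule no_halfplane)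
    then show ?thesis ..
  qed
qed

lemma cover:
  assumes v: "v \<noteq> 0"
  shows "\<exists>k<n. v \<in> cone_monoid (av k) (cv k)"
proof -
  define \<theta> where "\<theta> = ang v"
  have bt: "- pi < \<theta>" "\<theta> \<le> pi" using ang_bounds unfolding \<theta>_def by auto
  show ?thesis
  proof (cases "phi 0 \<le> \<theta> \<and> \<theta> \<le> phi (n - 1)")
    case True
    define K where "K = {k. k < n - 1 \<and> phi k \<le> \<theta>}"
    have fK: "finite K" unfolding K_def by simp
    have K0: "0 \<in> K" unfolding K_def using True n2 by simp
    define k where "k = Max K"
    have kK: "k \<in> K" unfolding k_def using fK K0 Max_in by blast
    then have k: "k < n - 1" "phi k \<le> \<theta>" unfolding K_def by auto
    have k1: "k + 1 < n" using k by simp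
    have up: "\<theta> \<le> phi (k + 1)"
    proof (cases "k + 1 < n - 1")
      case True
      have "k + 1 \<notin> K" using Max_ge[OF fK, of "k + 1"] unfolding k_def[symmetric] by auto
      then show ?thesis unfolding K_def using True by simp
    next
      case False
      then have "k + 1 = n - 1" using k by simp
      then show ?thesis using \<open>phi 0 \<le> \<theta> \<and> \<theta> \<le> phi (n - 1)\<close> by simp
    qed
    have cvk: "cv k = av (k + 1)" using cv_nonwrap[OF k1] .
    have kn: "k < n" using k1 by simp
    have b: "- pi < phi (k + 1)" "phi (k + 1) \<le> pi" "- pi < phi k" "phi k \<le> pi" using phi_bounds by auto
    from consec[OF kn] show ?thesis
    proof
      assume eq: "av k = cv k"
      then have "phi k = phi (k + 1)" using cvk ang_av by metis
      then have "ang (av k) = ang v" using k up ang_av unfolding \<theta>_def by simp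
      then have "det2 (av k) v = 0" "fst (av k) * fst v + snd (av k) * snd v > 0"
        using same_ang[OF av_nz[OF kn] v] by simp_all
      then have "rayS (av k) v" unfolding rayS_def by simp
      then have "v \<in> cone_monoid (av k) (av k)" using cm_ray[OF av_nz[OF kn]] by simp
      then show ?thesis using eq kn by metis
    next
      assume ac: "det2 (av k) (cv k) > 0"
      then have "sin (phi (k + 1) - phi k) > 0" using det_pos_iff[OF av_nz[OF kn] av_nz[OF k1]] cvk ang_av by simp
      then have lt: "phi (k + 1) - phi k < pi" using sin_pos_pos_range[of "phi (k + 1) - phi k"] k up b by simp
      have "sin (\<theta> - phi k) \<ge> 0" using sin_ge1[of "\<theta> - phi k"] k up lt by simp
      then have d1: "det2 (av k) v \<ge> 0" using det_nonneg_iff[OF av_nz[OF kn] v] ang_av unfolding \<theta>_def by simp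
      have "sin (phi (k + 1) - \<theta>) \<ge> 0" using sin_ge1[of "phi (k + 1) - \<theta>"] k up lt by simp
      then have d2: "det2 v (cv k) \<ge> 0" using det_nonneg_iff[OF v av_nz[OF k1]] ang_av cvk unfolding \<theta>_def by simp
      have "v \<in> cone_monoid (av k) (cv k)" using cm_sector[OF ac] d1 d2 unfolding inS_def by simp
      then show ?thesis using kn by blast
    qed
  next
    case False
    define k where "k = n - 1"
    have kn: "k + 1 = n" "k < n" unfolding k_def using n2 by auto
    have ac: "det2 (av k) (cv k) > 0" using wrap_pos[OF kn(1)] .
    have cvk: "cv k = av 0" using cv_wrap[OF kn(1)] .
    have b: "- pi < phi 0" "phi 0 \<le> pi" "- pi < phi k" "phi k \<le> pi" using phi_bounds by auto
    have "sin (phi 0 - phi k) > 0" using ac det_pos_iff[OF av_nz[OF kn(2)] av_nz[of 0]] cvk ang_av n2 by simp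
    moreover have "phi 0 \<le> phi k" using phi_mono kn by simp
    ultimately have gap: "phi 0 - phi k < - pi" using sin_pos_neg_range[of "phi 0 - phi k"] b by simp
    have "\<theta> < phi 0 \<or> \<theta> > phi k" using False unfolding k_def by auto
    then have "sin (\<theta> - phi k) > 0 \<and> sin (phi 0 - \<theta>) > 0"
    proof
      assume t: "\<theta> < phi 0"
      have "sin (\<theta> - phi k) > 0" using sin_gt2[of "\<theta> - phi k"] t gap b bt by simp
      moreover have "sin (phi 0 - \<theta>) > 0" using sin_gt1[of "phi 0 - \<theta>"] t gap b bt by simp
      ultimately show ?thesis by simp
    next
      assume t: "\<theta> > phi k"
      have "sin (\<theta> - phi k) > 0" using sin_gt1[of "\<theta> - phi k"] t gap b bt by simp
      moreover have "sin (phi 0 - \<theta>) > 0" using sin_gt2[of "phi 0 - \<theta>"] t gap b bt by simp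
      ultimately show ?thesis by simp
    qed
    then have "det2 (av k) v > 0" "det2 v (cv k) > 0"
      using det_pos_iff[OF av_nz[OF kn(2)] v] det_pos_iff[OF v av_nz[of 0]] ang_av cvk n2
      unfolding \<theta>_def by simp_all
    then have "v \<in> cone_monoid (av k) (cv k)" using cm_sector[OF ac] unfolding inS_def by simp
    then show ?thesis using kn by blast
  qed
qed

definition HH where "HH = (\<Union>k<n. hilbert_basis (cone_monoid (av k) (cv k)))"

lemma hbk:
  assumes k: "k < n"
  shows "hilbert_basis (cone_monoid (av k) (cv k)) = Irr (cone_monoid (av k) (cv k))"
  using consec[OF k]
proof
  assume "av k = cv k"
  then show ?thesis using hb_ray[OF av_nz[OF k]] by metis
next
  assume "det2 (av k) (cv k) > 0"
  then show ?thesis by (rule hb_sector)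
qed

lemma HH_iff: "x \<in> HH \<longleftrightarrow> (\<exists>k<n. x \<in> Irr (cone_monoid (av k) (cv k)))"
  unfolding HH_def using hbk by auto

lemma w_in_HH:
  assumes i: "i < n"
  shows "w i \<in> HH"
proof -
  obtain k where k: "k < n" "\<sigma> k = i" using sig_surj[OF i] by blast
  have a: "av k = w i" unfolding av_def using k by simp
  have "w i \<in> Irr (cone_monoid (av k) (cv k))"
    using consec[OF k(1)]
  proof
    assume eq: "av k = cv k"
    have "rayS (av k) (av k)" unfolding rayS_def by (simp add: det2_self)
    moreover have "\<not> (\<exists>p q. rayS (av k) p \<and> rayS (av k) q \<and> p \<noteq> 0 \<and> q \<noteq> 0 \<and> av k = p + q)"
      using ray_irr[OF av_prim[OF k(1)] av_prim[OF k(1)]] by blast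
    ultimately have "av k \<in> Irr (cone_monoid (av k) (av k))"
      using Irr_ray[OF av_nz[OF k(1)]] av_nz[OF k(1)] by blast
    then show ?thesis using eq a by metis
  next
    assume ac: "det2 (av k) (cv k) > 0"
    have "inS (av k) (cv k) (av k)" using ac unfolding inS_def by (simp add: det2_self)
    moreover have "irrS (av k) (cv k) (av k)"
      unfolding irrS_def using boundary_irr1[OF ac av_prim[OF k(1)]] by blast
    ultimately show ?thesis using Irr_sector[OF ac] av_nz[OF k(1)] a by metis
  qed
  then show ?thesis using HH_iff k by blast
qed

lemma negw_in_HH:
  assumes GI: "\<forall>l. Graver l \<longrightarrow> Indisp l" and i: "i < n"
  shows "- w i \<in> HH"
proof -
  have v0: "- w i \<noteq> 0" using w_nz[OF i] by simp
  obtain k where k: "k < n" "- w i \<in> cone_monoid (av k) (cv k)" using cover[OF v0] by blast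
  have "- w i \<in> Irr (cone_monoid (av k) (cv k))"
    using consec[OF k(1)]
  proof
    assume eq: "av k = cv k"
    have r: "rayS (av k) (- w i)" using k(2) eq cm_ray[OF av_nz[OF k(1)]] by metis
    have "\<not> (\<exists>p q. rayS (av k) p \<and> rayS (av k) q \<and> p \<noteq> 0 \<and> q \<noteq> 0 \<and> - w i = p + q)"
      using ray_irr[OF av_prim[OF k(1)] prim_neg[OF i]] by blast
    then have "- w i \<in> Irr (cone_monoid (av k) (av k))"
      using Irr_ray[OF av_nz[OF k(1)]] r v0 by blast
    then show ?thesis using eq by metis
  next
    assume ac: "det2 (av k) (cv k) > 0"
    have inS: "inS (av k) (cv k) (- w i)" using k(2) cm_sector[OF ac] by simp
    have "irrS (av k) (cv k) (- w i)" using dir1_sector[OF ac wfree_k[OF k(1)] i GI inS] .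
    then show ?thesis using Irr_sector[OF ac] inS v0 by blast
  qed
  then show ?thesis using HH_iff k by blast
qed

lemma HH_to_H:
  assumes HN: "\<forall>i<n. - w i \<in> HH"
  shows "\<forall>i<n. \<forall>y z. det2 y z > 0 \<and> Wfree y z \<and> det2 y (- w i) > 0 \<and> det2 (- w i) z > 0 \<longrightarrow> irrS y z (- w i)"
proof (intro allI impI)
  fix i y z assume i: "i < n" and h: "det2 y z > 0 \<and> Wfree y z \<and> det2 y (- w i) > 0 \<and> det2 (- w i) z > 0"
  define v where "v = - w i"
  have yz: "det2 y z > 0" and WF: "Wfree y z" and yv: "det2 y v > 0" and vz: "det2 v z > 0"
    using h unfolding v_def by auto
  have v0: "v \<noteq> 0" using w_nz[OF i] unfolding v_def by simp
  obtain k where k: "k < n" "v \<in> Irr (cone_monoid (av k) (cv k))" using HN i HH_iff unfolding v_def by blast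
  have aW: "\<not> (det2 y (av k) > 0 \<and> det2 (av k) z > 0)"
    using WF sig_lt[OF k(1)] unfolding Wfree_def av_def by blast
  have cW: "\<not> (det2 y (cv k) > 0 \<and> det2 (cv k) z > 0)"
  proof -
    have "(k + 1) mod n < n" using n2 by simp
    then show ?thesis using WF sig_lt unfolding Wfree_def cv_def by blast
  qed
  show "irrS y z (- w i)"
    using consec[OF k(1)]
  proof
    assume eq: "av k = cv k"
    have r: "rayS (av k) v" using k(2) eq Irr_ray[OF av_nz[OF k(1)]] by metis
    then have "det2 v (av k) = 0" using det2_swap[of v "av k"] unfolding rayS_def by simp
    then obtain m where m: "v = smul m (av k)" using line_coef[OF av_prim[OF k(1)]] by blast
    have "m * (fst (av k) * fst (av k) + snd (av k) * snd (av k)) \<ge> 0"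
      using r m unfolding rayS_def by (simp add: smul_def algebra_simps)
    moreover have "fst (av k) * fst (av k) + snd (av k) * snd (av k) > 0"
      using av_nz[OF k(1)] sq_pos by (simp add: prod_eq_iff)
    ultimately have "m \<ge> 0" by (simp add: zero_le_mult_iff)
    moreover have "m \<noteq> 0" using v0 m smul_zero_iff by auto
    ultimately have mp: "m > 0" by simp
    have "m * det2 y (av k) > 0" "m * det2 (av k) z > 0" using yv vz m by (simp_all add: det2_smul1 det2_smul2)
    then have "det2 y (av k) > 0" "det2 (av k) z > 0" using mp by (simp_all add: zero_less_mult_iff)
    then show ?thesis using aW by blast
  next
    assume ac: "det2 (av k) (cv k) > 0"
    define a where "a = av k"
    define c where "c = cv k"
    have ac': "det2 a c > 0" using ac unfolding a_def c_def .
    have iv: "inS a c v" "irrS a c v" using k(2) Irr_sector[OF ac] unfolding a_def c_def by auto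
    have aW': "\<not> (det2 y a > 0 \<and> det2 a z > 0)" using aW unfolding a_def .
    have cW': "\<not> (det2 y c > 0 \<and> det2 c z > 0)" using cW unfolding c_def .
    have dav: "det2 a v > 0"
    proof (rule ccontr)
      assume "\<not> ?thesis"
      then have "det2 a v = 0" using iv(1) unfolding inS_def by simp
      then have "det2 v a = 0" using det2_swap[of v a] by simp
      then obtain m where m: "v = smul m a" using line_coef[OF av_prim[OF k(1)]] unfolding a_def by blast
      have "m * det2 a c \<ge> 0" using iv(1) m unfolding inS_def by (simp add: det2_smul1)
      then have "m \<ge> 0" using ac' by (simp add: zero_le_mult_iff)
      moreover have "m \<noteq> 0" using v0 m smul_zero_iff by auto
      ultimately have mp: "m > 0" by simp
      have "m * det2 y a > 0" "m * det2 a z > 0" using yv vz m by (simp_all add: det2_smul1 det2_smul2)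
      then have "det2 y a > 0" "det2 a z > 0" using mp by (simp_all add: zero_less_mult_iff)
      then show False using aW' by blast
    qed
    have dvc: "det2 v c > 0"
    proof (rule ccontr)
      assume "\<not> ?thesis"
      then have "det2 v c = 0" using iv(1) unfolding inS_def by simp
      then obtain m where m: "v = smul m c" using line_coef[OF cv_prim[OF k(1)]] unfolding c_def by blast
      have "m * det2 a c \<ge> 0" using iv(1) m unfolding inS_def by (simp add: det2_smul2)
      then have "m \<ge> 0" using ac' by (simp add: zero_le_mult_iff)
      moreover have "m \<noteq> 0" using v0 m smul_zero_iff by auto
      ultimately have mp: "m > 0" by simp
      have "m * det2 y c > 0" "m * det2 c z > 0" using yv vz m by (simp_all add: det2_smul1 det2_smul2)
      then have "det2 y c > 0" "det2 c z > 0" using mp by (simp_all add: zero_less_mult_iff)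
      then show False using cW' by blast
    qed
    have day: "det2 a y \<ge> 0"
    proof (rule ccontr)
      assume "\<not> ?thesis"
      then have ya: "det2 y a > 0" using det2_swap[of y a] by simp
      have "det2 y v * det2 a z = det2 a v * det2 y z + det2 y a * det2 v z"
        using cramer_det2[of y v a z] by simp
      moreover have "det2 a v * det2 y z > 0" "det2 y a * det2 v z > 0" using dav yz ya vz by simp_all
      ultimately have "det2 y v * det2 a z > 0" by simp
      then have "det2 a z > 0" using yv by (simp add: zero_less_mult_iff)
      then show False using aW' ya by blast
    qed
    have dyc: "det2 y c > 0"
    proof -
      have "det2 a v * det2 y c = det2 a y * det2 v c + det2 a c * det2 y v" by (rule plucker1)
      moreover have "det2 a y * det2 v c \<ge> 0" "det2 a c * det2 y v > 0" using day dvc ac' yv by simp_all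
      ultimately have "det2 a v * det2 y c > 0" by simp
      then show ?thesis using dav by (simp add: zero_less_mult_iff)
    qed
    have dzc: "det2 z c \<ge> 0"
    proof (rule ccontr)
      assume "\<not> ?thesis"
      then have "det2 c z > 0" using det2_swap[of z c] by simp
      then show False using cW' dyc by blast
    qed
    have daz: "det2 a z > 0"
    proof -
      have "det2 a z * det2 v c = det2 a v * det2 z c + det2 a c * det2 v z" by (rule plucker2)
      moreover have "det2 a v * det2 z c \<ge> 0" "det2 a c * det2 v z > 0" using dav dzc ac' vz by simp_all
      ultimately have "det2 a z * det2 v c > 0" by simp
      then show ?thesis using dvc by (simp add: zero_less_mult_iff)
    qed
    have iy: "inS a c y" "inS a c z" using day dyc dzc daz unfolding inS_def by auto
    show "irrS y z (- w i)"
      unfolding irrS_def v_def[symmetric]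
    proof
      assume "\<exists>p q. inS y z p \<and> inS y z q \<and> p \<noteq> 0 \<and> q \<noteq> 0 \<and> v = p + q"
      then obtain p q where pq: "inS y z p" "inS y z q" "p \<noteq> 0" "q \<noteq> 0" "v = p + q" by blast
      have "inS a c p" "inS a c q" using subsector[OF yz iy] pq(1,2) by auto
      then show False using iv(2) pq unfolding irrS_def by blast
    qed
  qed
qed

theorem core:
  "(\<forall>l. Graver l \<longrightarrow> Indisp l) \<longleftrightarrow> (\<forall>i<n. - w i \<in> HH \<and> w i \<in> HH)"
proof
  assume GI: "\<forall>l. Graver l \<longrightarrow> Indisp l"
  show "\<forall>i<n. - w i \<in> HH \<and> w i \<in> HH" using negw_in_HH[OF GI] w_in_HH by blast
next
  assume "\<forall>i<n. - w i \<in> HH \<and> w i \<in> HH"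
  then have "\<forall>i<n. - w i \<in> HH" by blast
  then show "\<forall>l. Graver l \<longrightarrow> Indisp l" using dir2 HH_to_H by blast
qed

end

lemma scale_max:
  fixes g a b :: int
  assumes g: "g > 0"
  shows "(g * a \<le> max 0 (g * b)) \<longleftrightarrow> (a \<le> max 0 b)"
    and "(min 0 (g * b) \<le> g * a) \<longleftrightarrow> (min 0 b \<le> a)"
proof -
  have m1: "max 0 (g * b) = g * max 0 b" using g by (simp add: max_def mult_le_0_iff zero_le_mult_iff)
  have m2: "min 0 (g * b) = g * min 0 b" using g by (simp add: min_def mult_le_0_iff zero_le_mult_iff)
  show "(g * a \<le> max 0 (g * b)) \<longleftrightarrow> (a \<le> max 0 b)" unfolding m1 using g by simp
  show "(min 0 (g * b) \<le> g * a) \<longleftrightarrow> (min 0 b \<le> a)" unfolding m2 using g by simp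
qed

locale galeA =
  fixes A :: "nat \<Rightarrow> nat \<Rightarrow> int" and m n :: nat and b :: "nat \<Rightarrow> int \<times> int"
  assumes gt: "gale_transform A m n b" and pk: "pointed_kernel A m n"
    and bnz: "\<forall>j<n. b j \<noteq> (0, 0)"
begin

definition wr :: "nat \<Rightarrow> int \<times> int" where "wr j = reduced_gale (b j)"
definition xv :: "int \<times> int \<Rightarrow> nat \<Rightarrow> int" where "xv l j = fst l * fst (b j) + snd l * snd (b j)"
definition gj :: "nat \<Rightarrow> int" where "gj j = gcd (fst (b j)) (snd (b j))"

lemma gj_pos: "j < n \<Longrightarrow> gj j > 0"
  using bnz unfolding gj_def by (auto simp: prod_eq_iff)

lemma xv_det: "j < n \<Longrightarrow> xv l j = gj j * det2 l (wr j)"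
proof -
  assume j: "j < n"
  have d1: "gj j dvd fst (b j)" "gj j dvd snd (b j)" unfolding gj_def by simp_all
  have w: "wr j = (- (snd (b j) div gj j), fst (b j) div gj j)"
    unfolding wr_def reduced_gale_def gj_def[symmetric] using dvd_neg_div[OF d1(2)] by simp
  have "gj j * det2 l (wr j) = fst l * (gj j * (fst (b j) div gj j)) + snd l * (gj j * (snd (b j) div gj j))"
    unfolding w det2_def by (simp add: algebra_simps)
  also have "\<dots> = xv l j" unfolding xv_def using d1 by simp
  finally show ?thesis by simp
qed

lemma wr_prim: "j < n \<Longrightarrow> coprime (fst (wr j)) (snd (wr j))"
proof -
  assume j: "j < n"
  have d1: "gj j dvd snd (b j)" unfolding gj_def by simp
  have "fst (b j) \<noteq> 0 \<or> snd (b j) \<noteq> 0" using bnz j by (auto simp: prod_eq_iff)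
  then have c: "coprime (fst (b j) div gj j) (snd (b j) div gj j)" unfolding gj_def by (rule div_gcd_coprime)
  have w: "wr j = (- (snd (b j) div gj j), fst (b j) div gj j)"
    unfolding wr_def reduced_gale_def gj_def[symmetric] using dvd_neg_div[OF d1] by simp
  show ?thesis unfolding w using c by (simp add: coprime_commute)
qed

lemma ker_xv: "i < m \<Longrightarrow> (\<Sum>j<n. A i j * xv l j) = 0"
proof -
  assume i: "i < m"
  have "(\<Sum>j<n. A i j * xv l j) = fst l * (\<Sum>j<n. A i j * fst (b j)) + snd l * (\<Sum>j<n. A i j * snd (b j))"
    unfolding xv_def by (simp add: algebra_simps sum.distrib sum_distrib_left)
  then show ?thesis using gt i unfolding gale_transform_def by simp
qed

lemma xv_inj:
  assumes "\<forall>j<n. xv l j = xv l' j"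
  shows "l = l'"
proof -
  have "\<forall>i<m. (\<Sum>j<n. A i j * xv l j) = 0" using ker_xv by blast
  then have "\<exists>!l0 :: int \<times> int. \<forall>j<n. xv l j = fst l0 * fst (b j) + snd l0 * snd (b j)"
    using gt unfolding gale_transform_def by blast
  moreover have "\<forall>j<n. xv l j = fst l * fst (b j) + snd l * snd (b j)" unfolding xv_def by simp
  moreover have "\<forall>j<n. xv l j = fst l' * fst (b j) + snd l' * snd (b j)" using assms unfolding xv_def by simp
  ultimately show ?thesis by blast
qed

lemma kernel_xv:
  assumes "\<forall>i<m. (\<Sum>j<n. A i j * x j) = 0"
  shows "\<exists>l. \<forall>j<n. x j = xv l j"
  using gt assms unfolding gale_transform_def xv_def by blast

lemma xv_zero: "xv 0 j = 0" unfolding xv_def by simp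
lemma xv_neg: "xv (- l) j = - xv l j" unfolding xv_def by simp

lemma wr_span: "l \<noteq> 0 \<Longrightarrow> \<exists>j<n. det2 l (wr j) < 0"
proof (rule ccontr)
  assume l: "l \<noteq> 0" and "\<not> (\<exists>j<n. det2 l (wr j) < 0)"
  then have "\<forall>j<n. det2 l (wr j) \<ge> 0" by auto
  then have "\<forall>j<n. xv l j \<ge> 0" using xv_det gj_pos by (simp add: less_imp_le)
  moreover have "\<forall>i<m. (\<Sum>j<n. A i j * xv l j) = 0" using ker_xv by blast
  ultimately have "\<forall>j<n. xv l j = 0" using pk unfolding pointed_kernel_def by blast
  then have "\<forall>j<n. xv l j = xv 0 j" by (simp add: xv_zero)
  then have "l = 0" by (rule xv_inj)
  then show False using l by simp
qed

sublocale galegeo n wr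
  using wr_prim wr_span by unfold_locales auto

lemma Conf_xv: "Conf l y \<longleftrightarrow> (\<forall>j<n. min 0 (xv l j) \<le> xv y j \<and> xv y j \<le> max 0 (xv l j))"
  unfolding Conf_def using xv_det gj_pos scale_max by auto

lemma Pset_xv: "Pset l y \<longleftrightarrow> (\<forall>j<n. xv y j \<le> max 0 (xv l j))"
  unfolding Pset_def using xv_det gj_pos scale_max by auto

lemma matmul_eq_iff:
  "matmul A m n u = matmul A m n v \<longleftrightarrow> (\<exists>l. \<forall>j<n. int (u j) - int (v j) = xv l j)"
proof -
  have "matmul A m n u = matmul A m n v \<longleftrightarrow> (\<forall>i<m. (\<Sum>j<n. A i j * int (u j)) = (\<Sum>j<n. A i j * int (v j)))"
    unfolding matmul_def by (auto simp: fun_eq_iff)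
  also have "\<dots> \<longleftrightarrow> (\<forall>i<m. (\<Sum>j<n. A i j * (int (u j) - int (v j))) = 0)"
    by (simp add: right_diff_distrib sum_subtractf)
  also have "\<dots> \<longleftrightarrow> (\<exists>l. \<forall>j<n. int (u j) - int (v j) = xv l j)"
  proof
    assume "\<forall>i<m. (\<Sum>j<n. A i j * (int (u j) - int (v j))) = 0"
    then show "\<exists>l. \<forall>j<n. int (u j) - int (v j) = xv l j" by (rule kernel_xv)
  next
    assume "\<exists>l. \<forall>j<n. int (u j) - int (v j) = xv l j"
    then obtain l where l: "\<forall>j<n. int (u j) - int (v j) = xv l j" by blast
    show "\<forall>i<m. (\<Sum>j<n. A i j * (int (u j) - int (v j))) = 0"
    proof (intro allI impI)
      fix i assume i: "i < m"
      have "(\<Sum>j<n. A i j * (int (u j) - int (v j))) = (\<Sum>j<n. A i j * xv l j)"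
        by (rule sum.cong) (use l in auto)
      then show "(\<Sum>j<n. A i j * (int (u j) - int (v j))) = 0" using ker_xv[OF i] by simp
    qed
  qed
  finally show ?thesis .
qed

end

lemma natvecs_eq:
  assumes "u \<in> natvecs n" "v \<in> natvecs n" "\<forall>j<n. u j = v j"
  shows "u = v"
proof (rule ext)
  fix j show "u j = v j"
  proof (cases "j < n")
    case True then show ?thesis using assms(3) by blast
  next
    case False then show ?thesis using assms(1,2) unfolding natvecs_def by simp
  qed
qed

lemma indisp_sub_graver:
  assumes "(u, v) \<in> indispensable_set A m n"
  shows "(u, v) \<in> graver_set A m n"
proof -
  have u: "u \<in> natvecs n" and v: "v \<in> natvecs n" and uv: "u \<noteq> v"
    and F: "fiber A m n u = {u, v}" and D: "\<forall>j. u j = 0 \<or> v j = 0"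
    using assms unfolding indispensable_set_def by auto
  have "v \<in> fiber A m n u" using F by simp
  then have Muv: "matmul A m n u = matmul A m n v" unfolding fiber_def by simp
  have "\<not> (\<exists>u' v'. u' \<in> natvecs n \<and> v' \<in> natvecs n \<and> u' \<noteq> v' \<and>
             matmul A m n u' = matmul A m n v' \<and> u' \<le> u \<and> v' \<le> v \<and> (u', v') \<noteq> (u, v))"
  proof
    assume "\<exists>u' v'. u' \<in> natvecs n \<and> v' \<in> natvecs n \<and> u' \<noteq> v' \<and>
             matmul A m n u' = matmul A m n v' \<and> u' \<le> u \<and> v' \<le> v \<and> (u', v') \<noteq> (u, v)"
    then obtain u' v' where h: "u' \<in> natvecs n" "v' \<in> natvecs n" "u' \<noteq> v'"
      "matmul A m n u' = matmul A m n v'" "u' \<le> u" "v' \<le> v" "(u', v') \<noteq> (u, v)" by blast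
    have le: "\<And>j. u' j \<le> u j" "\<And>j. v' j \<le> v j" using h(5,6) by (auto simp: le_fun_def)
    define t where "t = (\<lambda>j. u j - u' j + v' j)"
    have tn: "t \<in> natvecs n" using u h(2) unfolding natvecs_def t_def by auto
    have ti: "int (t j) = int (u j) - int (u' j) + int (v' j)" for j
      using le(1)[of j] unfolding t_def by (simp add: of_nat_diff)
    have "matmul A m n t = matmul A m n u" unfolding matmul_def
    proof (rule ext)
      fix i
      show "(if i < m then \<Sum>j<n. A i j * int (t j) else 0) = (if i < m then \<Sum>j<n. A i j * int (u j) else 0)"
      proof (cases "i < m")
        case True
        have e: "(\<Sum>j<n. A i j * int (u' j)) = (\<Sum>j<n. A i j * int (v' j))"
          using fun_cong[OF h(4), of i] True unfolding matmul_def by simp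
        have "(\<Sum>j<n. A i j * int (t j)) = (\<Sum>j<n. A i j * int (u j)) - (\<Sum>j<n. A i j * int (u' j)) + (\<Sum>j<n. A i j * int (v' j))"
          unfolding ti by (simp add: algebra_simps sum.distrib sum_subtractf)
        then show ?thesis using e True by simp
      next
        case False then show ?thesis by simp
      qed
    qed
    then have "t \<in> fiber A m n u" using tn unfolding fiber_def by simp
    then have "t = u \<or> t = v" using F by simp
    then show False
    proof
      assume tu: "t = u"
      have "\<And>j. u j - u' j + v' j = u j" using fun_cong[OF tu] unfolding t_def by simp
      have "u' j = v' j" for j
      proof -
        have "u j - u' j + v' j = u j" using \<open>\<And>j. u j - u' j + v' j = u j\<close> .
        then show ?thesis using le(1)[of j] by linarith
      qed
      then show False using h(3) by (simp add: fun_eq_iff)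
    next
      assume tv: "t = v"
      have e: "\<And>j. u j - u' j + v' j = v j" using fun_cong[OF tv] unfolding t_def by simp
      have "u' j = u j \<and> v' j = v j" for j
      proof -
        have ee: "u j - u' j + v' j = v j" using e .
        have l1: "u' j \<le> u j" and l2: "v' j \<le> v j" using le by auto
        have "u j = 0 \<or> v j = 0" using spec[OF D, of j] .
        then show ?thesis
        proof
          assume "u j = 0"
          then show ?thesis using ee l1 by simp
        next
          assume v0: "v j = 0"
          then have "v' j = 0" using l2 by simp
          then show ?thesis using ee l1 v0 by simp
        qed
      qed
      then show False using h(7) by (simp add: fun_eq_iff)
    qed
  qed
  then show ?thesis using u v uv Muv unfolding graver_set_def by blast
qed

context galeA
begin

definition posv where "posv l j = (if j < n then nat (max 0 (xv l j)) else 0)"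
definition negv where "negv l j = (if j < n then nat (max 0 (- xv l j)) else 0)"

lemma pos_nat: "posv l \<in> natvecs n" and neg_nat: "negv l \<in> natvecs n"
  unfolding natvecs_def posv_def negv_def by auto

lemma pos_int: "j < n \<Longrightarrow> int (posv l j) = max 0 (xv l j)"
  and neg_int: "j < n \<Longrightarrow> int (negv l j) = max 0 (- xv l j)"
  unfolding posv_def negv_def by auto

lemma pn_diff: "j < n \<Longrightarrow> int (posv l j) - int (negv l j) = xv l j"
  using pos_int neg_int by simp

lemma pn_disj: "posv l j = 0 \<or> negv l j = 0"
  unfolding posv_def negv_def by auto

lemma pn_matmul: "matmul A m n (posv l) = matmul A m n (negv l)"
  unfolding matmul_eq_iff using pn_diff by blast

lemma xv_eq_inj: "(\<forall>j<n. xv y j = xv l j) \<Longrightarrow> y = l"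
  using xv_inj by blast

lemma nz_xv: "l \<noteq> 0 \<Longrightarrow> \<exists>j<n. xv l j \<noteq> 0"
proof (rule ccontr)
  assume "l \<noteq> 0" "\<not> (\<exists>j<n. xv l j \<noteq> 0)"
  then have "\<forall>j<n. xv l j = xv 0 j" by (simp add: xv_zero)
  then have "l = 0" by (rule xv_inj)
  then show False using \<open>l \<noteq> 0\<close> by simp
qed

lemma pos_ne_neg: "l \<noteq> 0 \<Longrightarrow> posv l \<noteq> negv l"
proof
  assume "l \<noteq> 0" "posv l = negv l"
  obtain j where j: "j < n" "xv l j \<noteq> 0" using nz_xv \<open>l \<noteq> 0\<close> by blast
  have "int (posv l j) - int (negv l j) = 0" using \<open>posv l = negv l\<close> by simp
  then show False using pn_diff[OF j(1)] j(2) by simp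
qed

lemma graver_char:
  assumes "(u, v) \<in> graver_set A m n"
  shows "\<exists>l. Graver l \<and> u = posv l \<and> v = negv l"
proof -
  have u: "u \<in> natvecs n" and v: "v \<in> natvecs n" and uv: "u \<noteq> v"
    and M: "matmul A m n u = matmul A m n v"
    and mini: "\<not> (\<exists>u' v'. u' \<in> natvecs n \<and> v' \<in> natvecs n \<and> u' \<noteq> v' \<and>
             matmul A m n u' = matmul A m n v' \<and> u' \<le> u \<and> v' \<le> v \<and> (u', v') \<noteq> (u, v))"
    using assms unfolding graver_set_def by auto
  obtain l where l: "\<forall>j<n. int (u j) - int (v j) = xv l j" using M matmul_eq_iff by blast
  have disj: "u j = 0 \<or> v j = 0" for j
  proof (rule ccontr)
    assume c: "\<not> (u j = 0 \<or> v j = 0)"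
    have jn: "j < n" using u c unfolding natvecs_def by force
    define u' where "u' = u(j := u j - 1)"
    define v' where "v' = v(j := v j - 1)"
    have "u' \<in> natvecs n" "v' \<in> natvecs n" using u v jn unfolding natvecs_def u'_def v'_def by auto
    moreover have "u' \<noteq> v'"
    proof
      assume "u' = v'"
      then have "\<forall>k. u k = v k" using c unfolding u'_def v'_def fun_eq_iff
        by (metis One_nat_def Suc_pred fun_upd_apply neq0_conv)
      then show False using uv by (simp add: fun_eq_iff)
    qed
    moreover have "matmul A m n u' = matmul A m n v'"
    proof -
      have "\<forall>k<n. int (u' k) - int (v' k) = xv l k"
      proof (intro allI impI)
        fix k assume k: "k < n"
        show "int (u' k) - int (v' k) = xv l k"
        proof (cases "k = j")
          case True
          then show ?thesis using l k c unfolding u'_def v'_def by (simp add: of_nat_diff)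
        next
          case False
          then show ?thesis using l k unfolding u'_def v'_def by simp
        qed
      qed
      then show ?thesis using matmul_eq_iff by blast
    qed
    moreover have "u' \<le> u" "v' \<le> v" unfolding u'_def v'_def le_fun_def by auto
    moreover have "(u', v') \<noteq> (u, v)"
    proof
      assume "(u', v') = (u, v)"
      then have "u' j = u j" by simp
      then have "u j - 1 = u j" unfolding u'_def by simp
      then show False using c by linarith
    qed
    ultimately show False using mini by blast
  qed
  have upos: "u = posv l"
  proof (rule natvecs_eq[OF u pos_nat], intro allI impI)
    fix j assume j: "j < n"
    have "int (u j) = max 0 (xv l j)" using l j disj[of j] by auto
    then have "int (u j) = int (posv l j)" using pos_int[OF j, of l] by simp
    then show "u j = posv l j" by simp
  qed
  have vneg: "v = negv l"
  proof (rule natvecs_eq[OF v neg_nat], intro allI impI)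
    fix j assume j: "j < n"
    have "int (v j) = max 0 (- xv l j)" using l j disj[of j] by auto
    then have "int (v j) = int (negv l j)" using neg_int[OF j, of l] by simp
    then show "v j = negv l j" by simp
  qed
  have G: "Graver l" unfolding Graver_def
  proof (intro conjI allI impI)
    show "l \<noteq> 0"
    proof
      assume "l = 0"
      then have "posv l = negv l" by (simp add: posv_def negv_def xv_zero fun_eq_iff)
      then show False using uv upos vneg by simp
    qed
    fix y assume C: "Conf l y"
    show "y = 0 \<or> y = l"
    proof (rule ccontr)
      assume ne: "\<not> (y = 0 \<or> y = l)"
      have Cx: "\<forall>j<n. min 0 (xv l j) \<le> xv y j \<and> xv y j \<le> max 0 (xv l j)" using C Conf_xv by blast
      have "posv y \<le> u" unfolding le_fun_def
      proof
        fix j show "posv y j \<le> u j"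
        proof (cases "j < n")
          case True
          have "int (posv y j) \<le> int (posv l j)" using pos_int[OF True] Cx True by auto
          then show ?thesis using upos by simp
        next
          case False then show ?thesis by (simp add: posv_def)
        qed
      qed
      moreover have "negv y \<le> v" unfolding le_fun_def
      proof
        fix j show "negv y j \<le> v j"
        proof (cases "j < n")
          case True
          have "int (negv y j) \<le> int (negv l j)" using neg_int[OF True] Cx True by auto
          then show ?thesis using vneg by simp
        next
          case False then show ?thesis by (simp add: negv_def)
        qed
      qed
      moreover have "posv y \<noteq> negv y" using pos_ne_neg ne by blast
      moreover have "(posv y, negv y) \<noteq> (u, v)"
      proof
        assume "(posv y, negv y) = (u, v)"
        then have "\<forall>j<n. xv y j = xv l j" using pn_diff l by (metis prod.inject)
        then have "y = l" by (rule xv_eq_inj)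
        then show False using ne by blast
      qed
      ultimately show False using mini pos_nat neg_nat pn_matmul by blast
    qed
  qed
  show ?thesis using G upos vneg by blast
qed

lemma graver_pos:
  assumes G: "Graver l"
  shows "(posv l, negv l) \<in> graver_set A m n"
proof -
  have l0: "l \<noteq> 0" and Gc: "\<And>y. Conf l y \<Longrightarrow> y = 0 \<or> y = l" using G unfolding Graver_def by auto
  have "\<not> (\<exists>u' v'. u' \<in> natvecs n \<and> v' \<in> natvecs n \<and> u' \<noteq> v' \<and>
             matmul A m n u' = matmul A m n v' \<and> u' \<le> posv l \<and> v' \<le> negv l \<and> (u', v') \<noteq> (posv l, negv l))"
  proof
    assume "\<exists>u' v'. u' \<in> natvecs n \<and> v' \<in> natvecs n \<and> u' \<noteq> v' \<and>
             matmul A m n u' = matmul A m n v' \<and> u' \<le> posv l \<and> v' \<le> negv l \<and> (u', v') \<noteq> (posv l, negv l)"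
    then obtain u' v' where h: "u' \<in> natvecs n" "v' \<in> natvecs n" "u' \<noteq> v'"
      "matmul A m n u' = matmul A m n v'" "u' \<le> posv l" "v' \<le> negv l" "(u', v') \<noteq> (posv l, negv l)" by blast
    have le: "\<And>j. u' j \<le> posv l j" "\<And>j. v' j \<le> negv l j" using h(5,6) by (auto simp: le_fun_def)
    obtain y where y: "\<forall>j<n. int (u' j) - int (v' j) = xv y j" using h(4) matmul_eq_iff by blast
    have "Conf l y" unfolding Conf_xv
    proof (intro allI impI conjI)
      fix j assume j: "j < n"
      have "int (u' j) \<le> max 0 (xv l j)" using le(1)[of j] pos_int[OF j] by (metis of_nat_le_iff)
      then show "xv y j \<le> max 0 (xv l j)" using y j by force
      have "int (v' j) \<le> max 0 (- xv l j)" using le(2)[of j] neg_int[OF j] by (metis of_nat_le_iff)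
      then show "min 0 (xv l j) \<le> xv y j" using y j by force
    qed
    then have "y = 0 \<or> y = l" by (rule Gc)
    then show False
    proof
      assume "y = 0"
      then have "\<forall>j<n. u' j = v' j" using y by (simp add: xv_zero)
      then have "u' = v'" using natvecs_eq h(1,2) by blast
      then show False using h(3) by simp
    next
      assume yl: "y = l"
      have "\<forall>j<n. u' j = posv l j \<and> v' j = negv l j"
      proof (intro allI impI)
        fix j assume j: "j < n"
        have d: "int (u' j) - int (v' j) = int (posv l j) - int (negv l j)" using y yl pn_diff j by simp
        show "u' j = posv l j \<and> v' j = negv l j"
          using pn_disj[of l j] d le[of j] by auto
      qed
      then have "u' = posv l" "v' = negv l" using natvecs_eq h(1,2) pos_nat neg_nat by blast+
      then show False using h(7) by simp
    qed
  qed
  then show ?thesis unfolding graver_set_def using pos_nat neg_nat pos_ne_neg[OF l0] pn_matmul by blast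
qed

lemma indisp_pos:
  assumes G: "Graver l" and I: "Indisp l"
  shows "(posv l, negv l) \<in> indispensable_set A m n"
proof -
  have l0: "l \<noteq> 0" using G unfolding Graver_def by auto
  have Ic: "\<And>y. Pset l y \<Longrightarrow> y = 0 \<or> y = l" using I unfolding Indisp_def by auto
  have "fiber A m n (posv l) = {posv l, negv l}"
  proof
    show "{posv l, negv l} \<subseteq> fiber A m n (posv l)"
      unfolding fiber_def using pos_nat neg_nat pn_matmul by auto
    show "fiber A m n (posv l) \<subseteq> {posv l, negv l}"
    proof
      fix t assume "t \<in> fiber A m n (posv l)"
      then have tn: "t \<in> natvecs n" and tm: "matmul A m n (posv l) = matmul A m n t" unfolding fiber_def by auto
      obtain y where y: "\<forall>j<n. int (posv l j) - int (t j) = xv y j" using tm matmul_eq_iff by blast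
      have "Pset l y" unfolding Pset_xv
      proof (intro allI impI)
        fix j assume j: "j < n"
        have "int (t j) \<ge> 0" by simp
        then show "xv y j \<le> max 0 (xv l j)" using y j pos_int[OF j, of l] by force
      qed
      then have "y = 0 \<or> y = l" by (rule Ic)
      then show "t \<in> {posv l, negv l}"
      proof
        assume "y = 0"
        then have "\<forall>j<n. t j = posv l j" using y by (simp add: xv_zero)
        then have "t = posv l" using natvecs_eq tn pos_nat by metis
        then show ?thesis by simp
      next
        assume yl: "y = l"
        have "\<forall>j<n. int (t j) = int (negv l j)"
        proof (intro allI impI)
          fix j assume j: "j < n"
          have "int (posv l j) - int (t j) = xv l j" using y j yl by simp
          then show "int (t j) = int (negv l j)" using pn_diff[OF j, of l] by simp
        qed
        then have "t = negv l" using natvecs_eq tn neg_nat by (metis of_nat_eq_iff)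
        then show ?thesis by simp
      qed
    qed
  qed
  moreover have "\<forall>j. posv l j = 0 \<or> negv l j = 0" using pn_disj[of l] by blast
  ultimately show ?thesis unfolding indispensable_set_def
    using pos_nat[of l] neg_nat[of l] pos_ne_neg[OF l0] by simp
qed

lemma pos_indisp:
  assumes "(posv l, negv l) \<in> indispensable_set A m n"
  shows "Indisp l"
  unfolding Indisp_def
proof (intro allI impI)
  fix y assume P: "Pset l y"
  have F: "fiber A m n (posv l) = {posv l, negv l}" using assms unfolding indispensable_set_def by auto
  have Px: "\<forall>j<n. xv y j \<le> max 0 (xv l j)" using P Pset_xv by blast
  define t where "t j = (if j < n then nat (int (posv l j) - xv y j) else 0)" for j
  have tn: "t \<in> natvecs n" unfolding natvecs_def t_def by auto
  have ti: "int (t j) = int (posv l j) - xv y j" if j: "j < n" for j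
  proof -
    have "xv y j \<le> int (posv l j)" using Px j pos_int[OF j, of l] by simp
    then show ?thesis unfolding t_def using j by simp
  qed
  have "matmul A m n (posv l) = matmul A m n t"
    unfolding matmul_eq_iff using ti by (intro exI[of _ y]) auto
  then have "t \<in> fiber A m n (posv l)" unfolding fiber_def using tn by simp
  then have "t = posv l \<or> t = negv l" using F by simp
  then show "y = 0 \<or> y = l"
  proof
    assume "t = posv l"
    then have "\<forall>j<n. xv y j = xv 0 j" using ti by (simp add: xv_zero)
    then show ?thesis using xv_inj by blast
  next
    assume tn': "t = negv l"
    have "\<forall>j<n. xv y j = xv l j"
    proof (intro allI impI)
      fix j assume j: "j < n"
      have "int (negv l j) = int (posv l j) - xv y j" using ti[OF j] tn' by simp
      then show "xv y j = xv l j" using pn_diff[OF j, of l] by simp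
    qed
    then show ?thesis using xv_inj by blast
  qed
qed

theorem sr_iff: "strongly_robust A m n \<longleftrightarrow> (\<forall>l. Graver l \<longrightarrow> Indisp l)"
proof
  assume SR: "strongly_robust A m n"
  show "\<forall>l. Graver l \<longrightarrow> Indisp l"
  proof (intro allI impI)
    fix l assume G: "Graver l"
    have "(posv l, negv l) \<in> graver_set A m n" using graver_pos[OF G] .
    then have "(posv l, negv l) \<in> indispensable_set A m n" using SR unfolding strongly_robust_def by simp
    then show "Indisp l" by (rule pos_indisp)
  qed
next
  assume GI: "\<forall>l. Graver l \<longrightarrow> Indisp l"
  show "strongly_robust A m n" unfolding strongly_robust_def
  proof
    show "indispensable_set A m n \<subseteq> graver_set A m n"
      using indisp_sub_graver by auto
    show "graver_set A m n \<subseteq> indispensable_set A m n"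
    proof
      fix p assume "p \<in> graver_set A m n"
      then obtain u v where p: "p = (u, v)" "(u, v) \<in> graver_set A m n" by (cases p) auto
      then obtain l where "Graver l" "u = posv l" "v = negv l" using graver_char by blast
      then show "p \<in> indispensable_set A m n" using indisp_pos GI p by blast
    qed
  qed
qed

end

theorem lemma2p5:
  fixes n :: nat and A :: "nat \<Rightarrow> nat \<Rightarrow> int" and b :: "nat \<Rightarrow> int \<times> int"
    and \<sigma> :: "nat \<Rightarrow> nat"
  assumes "n \<ge> 2"
    and "full_row_rank A (n - 2) n"
    and "pointed_kernel A (n - 2) n"
    and "gale_transform A (n - 2) n b"
    and "\<forall>j<n. b j \<noteq> (0, 0)"
    and "ccw_order n (\<lambda>j. reduced_gale (b j)) \<sigma>"
  shows "strongly_robust A (n - 2) n \<longleftrightarrow>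
         (\<forall>i<n. neg2 (reduced_gale (b i)) \<in> gale_hilbert n (\<lambda>j. reduced_gale (b j)) \<sigma>)"
proof -
  interpret G: galeA A "n - 2" n b
    using assms(3,4,5) by unfold_locales auto
  have wr: "G.wr = (\<lambda>j. reduced_gale (b j))" by (rule ext) (simp add: G.wr_def)
  interpret C: galeccw n G.wr \<sigma>
    using G.galegeo_axioms assms(1,6) wr by (intro galeccw.intro galeccw_axioms.intro) auto
  have GH: "gale_hilbert n G.wr \<sigma> = {u. u \<in> C.HH \<and> neg2 u \<in> C.HH}"
    unfolding gale_hilbert_def C.HH_def C.av_def C.cv_def Let_def by simp
  have neg: "neg2 u = - u" for u :: "int \<times> int" by (simp add: neg2_def prod_eq_iff)
  have "strongly_robust A (n - 2) n \<longleftrightarrow> (\<forall>l. G.Graver l \<longrightarrow> G.Indisp l)" by (rule G.sr_iff)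
  also have "\<dots> \<longleftrightarrow> (\<forall>i<n. - G.wr i \<in> C.HH \<and> G.wr i \<in> C.HH)" by (rule C.core)
  also have "\<dots> \<longleftrightarrow> (\<forall>i<n. neg2 (G.wr i) \<in> gale_hilbert n G.wr \<sigma>)"
    unfolding GH neg by simp
  finally show ?thesis unfolding wr .
qed

end
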